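(* Let $\mu$ be a computable measure on $\{0,1\}^{\mathbb{N}}\times\{0,1\}^{\mathbb{N}}$, and let $\mu'$ be the push-forward of $\mu$ under the map $(A,B)\mapsto A\oplus B$. Then a pair $(X,Y)$ is $\mu$-computably random if and only if $X\oplus Y$ is $\mu'$-computably random.
   Context: $A\oplus B$ is the join $A(0)B(0)A(1)B(1)\ldots$. Write $\mu(\sigma)=\mu([\sigma])$ and $\mu(\sigma\times\tau)=\mu([\sigma]\times[\tau])$; a measure is computable if these values are uniformly computable. For a computable measure $\mu$ on $\{0,1\}^{\mathbb{N}}$, $X$ is $\mu$-computably random iff $t(X)<\infty$ for every lower semicomputable $t:\{0,1\}^{\mathbb{N}}\to[0,\infty]$ and every computable measure $\nu$ on $\{0,1\}^{\mathbb{N}}$ with $\int_{[\sigma]}t\,d\mu\le\nu(\sigma)$ for all strings $\sigma$. For a computable measure $\mu$ on the product, $(X,Y)$ is $\mu$-computably random iff $t(X,Y)<\infty$ for every lower semicomputable $t:\{0,1\}^{\mathbb{N}}\times\{0,1\}^{\mathbb{N}}\to[0,\infty]$ and every computable measure $\nu$ on the product with $\int_{[\sigma]\times[\tau]}t\,d\mu\le\nu(\sigma\times\tau)$ for all strings $\sigma,\tau$. *)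

theory Defs
  imports "HOL-Analysis.Analysis" "HOL-Probability.Probability" "HOL-Library.Nat_Bijection"
begin

datatype recf = Zf | Sf | Proj nat | Comp recf "recf list" | Prim recf recf | Mn recf

inductive eval_recf :: "recf \<Rightarrow> nat list \<Rightarrow> nat \<Rightarrow> bool" where
  zero: "eval_recf Zf xs 0"
| succ: "eval_recf Sf (x # xs) (Suc x)"
| proj: "i < length xs \<Longrightarrow> eval_recf (Proj i) xs (xs ! i)"
| comp: "length ys = length gs \<Longrightarrow> (\<forall>i < length gs. eval_recf (gs ! i) xs (ys ! i))
          \<Longrightarrow> eval_recf f ys z \<Longrightarrow> eval_recf (Comp f gs) xs z"
| prim0: "eval_recf f xs y \<Longrightarrow> eval_recf (Prim f g) (0 # xs) y"
| primS: "eval_recf (Prim f g) (n # xs) y \<Longrightarrow> eval_recf g (n # y # xs) z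
          \<Longrightarrow> eval_recf (Prim f g) (Suc n # xs) z"
| mn: "eval_recf f (n # xs) 0 \<Longrightarrow> (\<forall>m < n. \<exists>y. eval_recf f (m # xs) y \<and> 0 < y)
          \<Longrightarrow> eval_recf (Mn f) xs n"

definition computable :: "(nat \<Rightarrow> nat) \<Rightarrow> bool" where
  "computable f \<longleftrightarrow> (\<exists>r. \<forall>n. eval_recf r [n] (f n))"

definition str_code :: "bool list \<Rightarrow> nat" where
  "str_code \<sigma> = list_encode (map of_bool \<sigma>)"

definition rat_dec :: "nat \<Rightarrow> rat" where
  "rat_dec n = (case prod_decode n of (a, b) \<Rightarrow> of_int (int_decode a) / of_nat (Suc b))"

type_synonym cantor = "nat \<Rightarrow> bool"

definition cantor_space :: "cantor measure" where
  "cantor_space = Pi\<^sub>M UNIV (\<lambda>_. count_space UNIV)"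

definition cyl :: "bool list \<Rightarrow> cantor set" where
  "cyl \<sigma> = {X. \<forall>i < length \<sigma>. X i = \<sigma> ! i}"

definition join :: "cantor \<Rightarrow> cantor \<Rightarrow> cantor" where
  "join A B = (\<lambda>n. if even n then A (n div 2) else B (n div 2))"

definition computable_measure :: "cantor measure \<Rightarrow> bool" where
  "computable_measure M \<longleftrightarrow> sets M = sets cantor_space
     \<and> (\<forall>\<sigma>. emeasure M (cyl \<sigma>) \<noteq> \<infinity>)
     \<and> (\<exists>f. computable f \<and> (\<forall>\<sigma> k.
          \<bar>real_of_rat (rat_dec (f (prod_encode (str_code \<sigma>, k)))) - measure M (cyl \<sigma>)\<bar> \<le> 1 / 2 ^ k))"

definition computable_measure2 :: "(cantor \<times> cantor) measure \<Rightarrow> bool" where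
  "computable_measure2 M \<longleftrightarrow> sets M = sets (cantor_space \<Otimes>\<^sub>M cantor_space)
     \<and> (\<forall>\<sigma> \<tau>. emeasure M (cyl \<sigma> \<times> cyl \<tau>) \<noteq> \<infinity>)
     \<and> (\<exists>f. computable f \<and> (\<forall>\<sigma> \<tau> k.
          \<bar>real_of_rat (rat_dec (f (prod_encode (str_code \<sigma>, prod_encode (str_code \<tau>, k)))))
             - measure M (cyl \<sigma> \<times> cyl \<tau>)\<bar> \<le> 1 / 2 ^ k))"

definition lsc :: "(cantor \<Rightarrow> ennreal) \<Rightarrow> bool" where
  "lsc t \<longleftrightarrow> (\<exists>g. computable g \<and> (\<forall>X. t X =
     (SUP p \<in> {(\<sigma>, k). (\<exists>n. g n = prod_encode (str_code \<sigma>, k)) \<and> X \<in> cyl \<sigma>}.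
        ennreal (real_of_rat (rat_dec (snd p))))))"

definition lsc2 :: "(cantor \<times> cantor \<Rightarrow> ennreal) \<Rightarrow> bool" where
  "lsc2 t \<longleftrightarrow> (\<exists>g. computable g \<and> (\<forall>X Y. t (X, Y) =
     (SUP p \<in> {(\<sigma>, \<tau>, k). (\<exists>n. g n = prod_encode (str_code \<sigma>, prod_encode (str_code \<tau>, k)))
                 \<and> X \<in> cyl \<sigma> \<and> Y \<in> cyl \<tau>}.
        ennreal (real_of_rat (rat_dec (snd (snd p)))))))"

definition comp_random :: "cantor measure \<Rightarrow> cantor \<Rightarrow> bool" where
  "comp_random \<mu> X \<longleftrightarrow> (\<forall>t \<nu>. lsc t \<and> computable_measure \<nu>
      \<and> (\<forall>\<sigma>. (\<integral>\<^sup>+ Z \<in> cyl \<sigma>. t Z \<partial>\<mu>) \<le> emeasure \<nu> (cyl \<sigma>)) \<longrightarrow> t X < \<infinity>)"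

definition comp_random2 :: "(cantor \<times> cantor) measure \<Rightarrow> cantor \<times> cantor \<Rightarrow> bool" where
  "comp_random2 \<mu> XY \<longleftrightarrow> (\<forall>t \<nu>. lsc2 t \<and> computable_measure2 \<nu>
      \<and> (\<forall>\<sigma> \<tau>. (\<integral>\<^sup>+ Z \<in> cyl \<sigma> \<times> cyl \<tau>. t Z \<partial>\<mu>) \<le> emeasure \<nu> (cyl \<sigma> \<times> cyl \<tau>))
      \<longrightarrow> t XY < \<infinity>)"

end

theory Submission
  imports Defs
begin


definition recfn :: "nat \<Rightarrow> (nat list \<Rightarrow> nat) \<Rightarrow> bool" where
  "recfn n f \<longleftrightarrow> (\<exists>r. \<forall>xs. length xs = n \<longrightarrow> eval_recf r xs (f xs))"

lemma recfn_cong: "recfn n f \<Longrightarrow> (\<And>xs. length xs = n \<Longrightarrow> f xs = g xs) \<Longrightarrow> recfn n g"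
  unfolding recfn_def by metis

lemma recfn_zero: "recfn n (\<lambda>_. 0)"
  unfolding recfn_def by (metis eval_recf.zero)

lemma recfn_proj: "i < n \<Longrightarrow> recfn n (\<lambda>xs. xs ! i)"
  unfolding recfn_def by (metis eval_recf.proj)

lemma recfn_comp:
  assumes g: "recfn m g" and len: "length fs = m" and fs: "\<forall>f\<in>set fs. recfn n f"
  shows "recfn n (\<lambda>xs. g (map (\<lambda>f. f xs) fs))"
proof -
  obtain rg where rg: "\<And>ys. length ys = m \<Longrightarrow> eval_recf rg ys (g ys)" using g unfolding recfn_def by blast
  have "\<forall>i<length fs. \<exists>r. \<forall>xs. length xs = n \<longrightarrow> eval_recf r xs ((fs!i) xs)"
    using fs unfolding recfn_def by (meson nth_mem)
  then obtain R where R: "\<And>i xs. i < length fs \<Longrightarrow> length xs = n \<Longrightarrow> eval_recf (R i) xs ((fs!i) xs)"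
    by metis
  show ?thesis unfolding recfn_def
  proof (intro exI allI impI)
    fix xs :: "nat list" assume xs: "length xs = n"
    show "eval_recf (Comp rg (map R [0..<length fs])) xs (g (map (\<lambda>f. f xs) fs))"
      by (rule eval_recf.comp[where ys="map (\<lambda>f. f xs) fs"]) (auto simp: R xs rg len)
  qed
qed

lemma recfn_suc: "recfn n f \<Longrightarrow> recfn n (\<lambda>xs. Suc (f xs))"
proof -
  assume f: "recfn n f"
  have "recfn 1 (\<lambda>ys. Suc (ys ! 0))" unfolding recfn_def
    by (rule exI[of _ Sf]) (auto simp: length_Suc_conv intro: eval_recf.succ)
  from recfn_comp[OF this, of "[f]"] f show ?thesis by simp
qed

fun PR :: "(nat list \<Rightarrow> nat) \<Rightarrow> (nat list \<Rightarrow> nat) \<Rightarrow> nat \<Rightarrow> nat list \<Rightarrow> nat" where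
  "PR f g 0 xs = f xs"
| "PR f g (Suc k) xs = g (k # PR f g k xs # xs)"

lemma recfn_prim_raw:
  assumes f: "recfn n f" and g: "recfn (Suc (Suc n)) g"
  shows "recfn (Suc n) (\<lambda>xs. PR f g (hd xs) (tl xs))"
proof -
  obtain rf where rf: "\<And>ys. length ys = n \<Longrightarrow> eval_recf rf ys (f ys)" using f unfolding recfn_def by blast
  obtain rg where rg: "\<And>ys. length ys = Suc (Suc n) \<Longrightarrow> eval_recf rg ys (g ys)" using g unfolding recfn_def by blast
  have *: "length ys = n \<Longrightarrow> eval_recf (Prim rf rg) (k # ys) (PR f g k ys)" for k ys
  proof (induction k)
    case 0 then show ?case by (auto intro: eval_recf.prim0 rf)
  next
    case (Suc k) then show ?case by (auto intro!: eval_recf.primS rg)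
  qed
  show ?thesis unfolding recfn_def
    by (rule exI[of _ "Prim rf rg"]) (auto simp: length_Suc_conv *)
qed

lemma map_nth_upt: "map (\<lambda>i. xs ! i) [0..<length xs] = xs"
  by (simp add: map_nth)

lemma recfn_PR:
  assumes b: "recfn n b" and f: "recfn n f" and g: "recfn (Suc (Suc n)) g"
    and h: "\<And>xs. length xs = n \<Longrightarrow> h xs = PR f g (b xs) xs"
  shows "recfn n h"
proof -
  have fs: "\<forall>f\<in>set (b # map (\<lambda>i xs. xs ! i) [0..<n]). recfn n f"
    using b by (auto intro: recfn_proj)
  have "recfn n (\<lambda>xs. PR f g (hd (map (\<lambda>f. f xs) (b # map (\<lambda>i xs. xs ! i) [0..<n])))
          (tl (map (\<lambda>f. f xs) (b # map (\<lambda>i xs. xs ! i) [0..<n]))))"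
    by (rule recfn_comp[OF recfn_prim_raw[OF f g] _ fs]) simp
  then show ?thesis
    by (rule recfn_cong) (simp add: h map_nth_upt[simplified] comp_def, metis map_nth_upt)
qed

lemma recfn_comp1:
  assumes "recfn 1 (\<lambda>xs. h (xs!0))" "recfn n f"
  shows "recfn n (\<lambda>xs. h (f xs))"
  using recfn_comp[OF assms(1), of "[f]"] assms(2) by simp

lemma recfn_comp2:
  assumes "recfn 2 (\<lambda>xs. h (xs!0) (xs!1))" "recfn n f" "recfn n g"
  shows "recfn n (\<lambda>xs. h (f xs) (g xs))"
  using recfn_comp[OF assms(1), of "[f,g]"] assms(2,3) by simp

lemma recfn_comp3:
  assumes "recfn 3 (\<lambda>xs. h (xs!0) (xs!1) (xs!2))" "recfn n f" "recfn n g" "recfn n k"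
  shows "recfn n (\<lambda>xs. h (f xs) (g xs) (k xs))"
  using recfn_comp[OF assms(1), of "[f,g,k]"] assms(2-4) by simp

lemma recfn_reindex:
  assumes h: "recfn n h" and len: "length is = n" and lt: "\<forall>i\<in>set is. i < m"
  shows "recfn m (\<lambda>xs. h (map (\<lambda>i. xs ! i) is))"
proof -
  have "recfn m (\<lambda>xs. h (map (\<lambda>f. f xs) (map (\<lambda>i xs. xs ! i) is)))"
    by (rule recfn_comp[OF h]) (use len lt in \<open>auto intro: recfn_proj\<close>)
  then show ?thesis by (simp add: comp_def)
qed

lemma recfn_const: "recfn n (\<lambda>_. c)"
  by (induction c) (auto intro: recfn_zero recfn_suc)

lemma PR_add: "PR (\<lambda>xs. xs!1) (\<lambda>ys. Suc (ys!1)) k xs = xs!1 + k"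
  by (induction k) auto

lemma recfn_add2: "recfn 2 (\<lambda>xs. xs!0 + xs!1)"
proof (rule recfn_PR[where b="\<lambda>xs. xs!0" and f="\<lambda>xs. xs!1" and g="\<lambda>ys. Suc (ys!1)"])
  show "recfn (Suc (Suc 2)) (\<lambda>ys. Suc (ys!1))" by (rule recfn_suc, rule recfn_proj) simp
qed (auto intro: recfn_proj simp only: PR_add)

lemma recfn_add: "recfn n f \<Longrightarrow> recfn n g \<Longrightarrow> recfn n (\<lambda>xs. f xs + g xs)"
  using recfn_comp2[OF recfn_add2] by blast

lemma PR_mult: "PR (\<lambda>xs. 0) (\<lambda>ys. ys!1 + ys!2) k xs = xs!0 * k"
  by (induction k) auto

lemma recfn_mult2: "recfn 2 (\<lambda>xs. xs!0 * xs!1)"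
proof (rule recfn_PR[where b="\<lambda>xs. xs!1" and f="\<lambda>xs. 0" and g="\<lambda>ys. ys!1 + ys!2"])
  show "recfn (Suc (Suc 2)) (\<lambda>ys. ys!1 + ys!2)" by (rule recfn_add; rule recfn_proj) simp_all
qed (auto intro: recfn_proj recfn_zero simp only: PR_mult)

lemma recfn_mult: "recfn n f \<Longrightarrow> recfn n g \<Longrightarrow> recfn n (\<lambda>xs. f xs * g xs)"
  using recfn_comp2[OF recfn_mult2] by blast

lemma PR_pred: "PR (\<lambda>xs. 0) (\<lambda>ys. ys!0) k xs = k - 1"
  by (induction k) auto

lemma recfn_pred1: "recfn 1 (\<lambda>xs. xs!0 - 1)"
  by (rule recfn_PR[where b="\<lambda>xs. xs!0" and f="\<lambda>xs. 0" and g="\<lambda>ys. ys!0"])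
     (auto intro: recfn_proj recfn_zero simp: PR_pred)

lemma PR_sub: "PR (\<lambda>xs. xs!0) (\<lambda>ys. ys!1 - 1) k xs = xs!0 - k"
  by (induction k) auto

lemma recfn_sub2: "recfn 2 (\<lambda>xs. xs!0 - xs!1)"
proof (rule recfn_PR[where b="\<lambda>xs. xs!1" and f="\<lambda>xs. xs!0" and g="\<lambda>ys. ys!1 - 1"])
  show "recfn (Suc (Suc 2)) (\<lambda>ys. ys!1 - 1)" by (rule recfn_comp1[OF recfn_pred1], rule recfn_proj) simp
qed (auto intro: recfn_proj simp only: PR_sub)

lemma recfn_sub: "recfn n f \<Longrightarrow> recfn n g \<Longrightarrow> recfn n (\<lambda>xs. f xs - g xs)"
  using recfn_comp2[OF recfn_sub2] by blast

definition recpred :: "nat \<Rightarrow> (nat list \<Rightarrow> bool) \<Rightarrow> bool" where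
  "recpred n P \<longleftrightarrow> recfn n (\<lambda>xs. of_bool (P xs))"

lemma recfn_If:
  assumes "recpred n P" "recfn n f" "recfn n g"
  shows "recfn n (\<lambda>xs. if P xs then f xs else g xs)"
proof -
  have "recfn n (\<lambda>xs. of_bool (P xs) * f xs + (1 - of_bool (P xs)) * g xs)"
    using assms unfolding recpred_def by (intro recfn_add recfn_mult recfn_sub recfn_const)
  then show ?thesis by (rule recfn_cong) auto
qed

lemma recpred_le: "recfn n f \<Longrightarrow> recfn n g \<Longrightarrow> recpred n (\<lambda>xs. f xs \<le> g xs)"
  unfolding recpred_def
  by (rule recfn_cong[where f="\<lambda>xs. 1 - (f xs - g xs)"]) (auto intro: recfn_sub recfn_const)

lemma recpred_not: "recpred n P \<Longrightarrow> recpred n (\<lambda>xs. \<not> P xs)"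
  unfolding recpred_def
  by (rule recfn_cong[where f="\<lambda>xs. 1 - of_bool (P xs)"]) (auto intro: recfn_sub recfn_const)

lemma recpred_and: "recpred n P \<Longrightarrow> recpred n Q \<Longrightarrow> recpred n (\<lambda>xs. P xs \<and> Q xs)"
  unfolding recpred_def
  by (rule recfn_cong[where f="\<lambda>xs. of_bool (P xs) * of_bool (Q xs)"]) (auto intro: recfn_mult)

lemma recpred_or: "recpred n P \<Longrightarrow> recpred n Q \<Longrightarrow> recpred n (\<lambda>xs. P xs \<or> Q xs)"
  using recpred_not[OF recpred_and[OF recpred_not recpred_not]] by simp

lemma recpred_eq: "recfn n f \<Longrightarrow> recfn n g \<Longrightarrow> recpred n (\<lambda>xs. f xs = g xs)"
  using recpred_and[OF recpred_le recpred_le, of n f g g f] by (simp add: le_antisym eq_iff)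

lemma recpred_less: "recfn n f \<Longrightarrow> recfn n g \<Longrightarrow> recpred n (\<lambda>xs. f xs < g xs)"
  using recpred_not[OF recpred_le, of n g f] by (simp add: not_le)

lemma PR_sum: "PR (\<lambda>xs. 0) (\<lambda>ys. ys!1 + h (ys!0 # drop 2 ys)) k xs = (\<Sum>i<k. h (i # xs))"
  by (induction k) auto

lemma drop_eq_map_nth: "drop k xs = map (\<lambda>i. xs ! i) [k..<length xs]"
  by (rule nth_equalityI) auto

lemma recfn_shift2: "recfn (Suc n) h \<Longrightarrow> recfn (Suc (Suc n)) (\<lambda>ys. h (ys!0 # drop 2 ys))"
proof -
  assume h: "recfn (Suc n) h"
  have "recfn (Suc (Suc n)) (\<lambda>xs. h (map (\<lambda>i. xs ! i) (0 # [2..<n+2])))"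
    by (rule recfn_reindex[OF h]) auto
  then show ?thesis
  proof (rule recfn_cong)
    fix xs :: "nat list" assume "length xs = Suc (Suc n)"
    then have "n + 2 = length xs" by simp
    then show "h (map (\<lambda>i. xs ! i) (0 # [2..<n+2])) = h (xs ! 0 # drop 2 xs)"
      by (simp only: drop_eq_map_nth[of 2] list.map)
  qed
qed

lemma recfn_shift1: "recfn n h \<Longrightarrow> recfn (Suc (Suc n)) (\<lambda>ys. h (drop 2 ys))"
proof -
  assume h: "recfn n h"
  have "recfn (Suc (Suc n)) (\<lambda>xs. h (map (\<lambda>i. xs ! i) [2..<n+2]))"
    by (rule recfn_reindex[OF h]) auto
  then show ?thesis
  proof (rule recfn_cong)
    fix xs :: "nat list" assume "length xs = Suc (Suc n)"
    then have "n + 2 = length xs" by simp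
    then show "h (map (\<lambda>i. xs ! i) [2..<n+2]) = h (drop 2 xs)"
      by (simp only: drop_eq_map_nth[of 2])
  qed
qed

lemma recfn_sum:
  assumes h: "recfn (Suc n) h" and b: "recfn n b"
  shows "recfn n (\<lambda>xs. \<Sum>i<b xs. h (i # xs))"
proof (rule recfn_PR[OF b recfn_zero])
  show "recfn (Suc (Suc n)) (\<lambda>ys. ys!1 + h (ys!0 # drop 2 ys))"
    by (rule recfn_add[OF recfn_proj recfn_shift2[OF h]]) simp
qed (simp only: PR_sum)

lemma recpred_all:
  assumes P: "recpred (Suc n) P" and b: "recfn n b"
  shows "recpred n (\<lambda>xs. \<forall>i<b xs. P (i # xs))"
  unfolding recpred_def
proof (rule recfn_cong)
  show "recfn n (\<lambda>xs. 1 - (\<Sum>i<b xs. 1 - of_bool (P (i # xs))))"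
    using P b unfolding recpred_def by (intro recfn_sub recfn_const recfn_sum) auto
  fix xs :: "nat list"
  show "1 - (\<Sum>i<b xs. 1 - of_bool (P (i # xs))) = (of_bool (\<forall>i<b xs. P (i # xs)) :: nat)"
  proof -
    define S where "S = (\<Sum>i<b xs. 1 - of_bool (P (i # xs)) :: nat)"
    have A: "S = 0 \<longleftrightarrow> (\<forall>i<b xs. P (i # xs))"
      unfolding S_def by (subst sum_eq_0_iff) auto
    have "1 - S = of_bool (S = 0)" by (cases S) auto
    then show ?thesis using A by (simp add: S_def)
  qed
qed

lemma recpred_ex:
  assumes P: "recpred (Suc n) P" and b: "recfn n b"
  shows "recpred n (\<lambda>xs. \<exists>i<b xs. P (i # xs))"
  using recpred_not[OF recpred_all[OF recpred_not[OF P] b]] by simp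

lemma recpred_true: "recpred n (\<lambda>_. True)"
  unfolding recpred_def by (simp add: recfn_const)

lemma recpred_cong: "recpred n P \<Longrightarrow> (\<And>xs. length xs = n \<Longrightarrow> P xs = Q xs) \<Longrightarrow> recpred n Q"
  unfolding recpred_def by (erule recfn_cong) auto

lemma div_as_sum:
  assumes "0 < m"
  shows "(\<Sum>i<a. of_bool (Suc i * m \<le> a) :: nat) = a div m"
proof -
  have "{i. i < a \<and> Suc i * m \<le> a} = {..<a div m}"
  proof (rule set_eqI, rule iffI)
    fix i assume "i \<in> {i. i < a \<and> Suc i * m \<le> a}"
    then show "i \<in> {..<a div m}" using assms
      by (simp add: less_eq_Suc_le less_eq_div_iff_mult_less_eq)
  next
    fix i assume i: "i \<in> {..<a div m}"
    then have "Suc i \<le> a div m" by simp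
    then have "Suc i * m \<le> a" using assms by (simp add: less_eq_div_iff_mult_less_eq)
    moreover have "i < a" using i div_le_dividend[of a m]
      by (meson lessThan_iff order_less_le_trans)
    ultimately show "i \<in> {i. i < a \<and> Suc i * m \<le> a}" by simp
  qed
  then show ?thesis by (simp add: sum.If_cases[where P="\<lambda>i. Suc i * m \<le> a"] Int_def)
qed

lemma recfn_lift: "recfn n f \<Longrightarrow> recfn (Suc n) (\<lambda>ys. f (tl ys))"
proof -
  assume f: "recfn n f"
  have "recfn (Suc n) (\<lambda>xs. f (map (\<lambda>i. xs ! i) [1..<Suc n]))"
    by (rule recfn_reindex[OF f]) auto
  then show ?thesis
  proof (rule recfn_cong)
    fix xs :: "nat list" assume "length xs = Suc n"
    then have "map (\<lambda>i. xs ! i) [1..<Suc n] = tl xs"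
      by (intro nth_equalityI) (auto simp del: upt_Suc simp: nth_tl)
    then show "f (map (\<lambda>i. xs ! i) [1..<Suc n]) = f (tl xs)" by simp
  qed
qed

lemma recfn_div: "recfn n f \<Longrightarrow> recfn n g \<Longrightarrow> recfn n (\<lambda>xs. f xs div g xs)"
proof -
  assume f: "recfn n f" and g: "recfn n g"
  have h: "recfn (Suc n) (\<lambda>ys. of_bool (Suc (ys!0) * g (tl ys) \<le> f (tl ys)))"
    using recpred_le[OF recfn_mult[OF recfn_suc[OF recfn_proj] recfn_lift[OF g]] recfn_lift[OF f]]
    unfolding recpred_def by simp
  have "recfn n (\<lambda>xs. if g xs = 0 then 0 else \<Sum>i<f xs. of_bool (Suc ((i#xs)!0) * g (tl (i#xs)) \<le> f (tl (i#xs))))"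
    by (rule recfn_If[OF recpred_eq[OF g recfn_const] recfn_const recfn_sum[OF h f]])
  then show ?thesis
  proof (rule recfn_cong)
    fix xs :: "nat list"
    show "(if g xs = 0 then 0 else \<Sum>i<f xs. of_bool (Suc ((i#xs)!0) * g (tl (i#xs)) \<le> f (tl (i#xs)))) = f xs div g xs"
    proof (cases "g xs = 0")
      case False
      then have "0 < g xs" by simp
      then show ?thesis using False by (simp only: if_False nth_Cons_0 list.sel(3) div_as_sum)
    qed simp
  qed
qed

lemma recfn_mod: assumes "recfn n f" "recfn n g" shows "recfn n (\<lambda>xs. f xs mod g xs)"
  by (rule recfn_cong[OF recfn_sub[OF assms(1) recfn_mult[OF assms(2) recfn_div[OF assms]]]])
     (simp add: minus_mult_div_eq_mod)

lemma PR_pow: "PR (\<lambda>xs. 1) (\<lambda>ys. 2 * ys!1) k xs = 2 ^ k"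
  by (induction k) auto

lemma recfn_pow2: "recfn n f \<Longrightarrow> recfn n (\<lambda>xs. 2 ^ f xs)"
proof -
  have "recfn 1 (\<lambda>xs. 2 ^ (xs!0))"
  proof (rule recfn_PR[where b="\<lambda>xs. xs!0" and f="\<lambda>xs. 1" and g="\<lambda>ys. 2 * ys!1"])
    show "recfn (Suc (Suc 1)) (\<lambda>ys. 2 * ys!1)" by (rule recfn_mult[OF recfn_const recfn_proj]) simp
  qed (auto intro: recfn_proj recfn_const simp only: PR_pow)
  then show "recfn n f \<Longrightarrow> recfn n (\<lambda>xs. 2 ^ f xs)" by (rule recfn_comp1)
qed

lemma PR_tri: "PR (\<lambda>xs. 0) (\<lambda>ys. ys!1 + Suc (ys!0)) k xs = triangle k"
  by (induction k) auto

lemma recfn_triangle: "recfn n f \<Longrightarrow> recfn n (\<lambda>xs. triangle (f xs))"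
proof -
  have "recfn 1 (\<lambda>xs. triangle (xs!0))"
  proof (rule recfn_PR[where b="\<lambda>xs. xs!0" and f="\<lambda>xs. 0" and g="\<lambda>ys. ys!1 + Suc (ys!0)"])
    show "recfn (Suc (Suc 1)) (\<lambda>ys. ys!1 + Suc (ys!0))" by (rule recfn_add[OF recfn_proj recfn_suc[OF recfn_proj]]) simp_all
  qed (auto intro: recfn_proj recfn_const simp only: PR_tri)
  then show "recfn n f \<Longrightarrow> recfn n (\<lambda>xs. triangle (f xs))" by (rule recfn_comp1)
qed

lemma recfn_pe: "recfn n f \<Longrightarrow> recfn n g \<Longrightarrow> recfn n (\<lambda>xs. prod_encode (f xs, g xs))"
  unfolding prod_encode_def by (simp add: recfn_add recfn_triangle)

lemma triangle_mono: "i \<le> j \<Longrightarrow> triangle i \<le> triangle j"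
  unfolding triangle_def by (intro div_le_mono mult_le_mono) auto

lemma le_triangle: "i \<le> triangle i"
  by (induction i) auto

definition pd_sum :: "nat \<Rightarrow> nat" where
  "pd_sum n = (\<Sum>i<n. of_bool (triangle (Suc i) \<le> n))"

lemma pd_sum_eq: "pd_sum n = fst (prod_decode n) + snd (prod_decode n)"
proof -
  obtain a b where ab: "prod_decode n = (a, b)" by fastforce
  then have n: "n = triangle (a + b) + a" using prod_decode_inverse[of n] by (simp add: prod_encode_def)
  have "{i. i < n \<and> triangle (Suc i) \<le> n} = {..<a+b}"
  proof (rule set_eqI, rule iffI)
    fix i assume "i \<in> {i. i < n \<and> triangle (Suc i) \<le> n}"
    then have i: "i < n" "triangle (Suc i) \<le> n" by auto
    show "i \<in> {..<a+b}"
    proof (rule ccontr)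
      assume "i \<notin> {..<a+b}"
      then have "triangle (Suc (a+b)) \<le> triangle (Suc i)" by (intro triangle_mono) simp
      then show False using i n by simp
    qed
  next
    fix i assume "i \<in> {..<a+b}"
    then have i: "Suc i \<le> a + b" by simp
    have "triangle (Suc i) \<le> n" using triangle_mono[OF i] n by simp
    moreover have "i < n" using i le_triangle[of "a+b"] n by simp
    ultimately show "i \<in> {i. i < n \<and> triangle (Suc i) \<le> n}" by simp
  qed
  then show ?thesis unfolding pd_sum_def by (simp add: sum.If_cases Int_def ab)
qed

lemma pd_fst: "fst (prod_decode n) = n - triangle (pd_sum n)"
proof -
  obtain a b where ab: "prod_decode n = (a, b)" by fastforce
  then have n: "n = triangle (a + b) + a" using prod_decode_inverse[of n] by (simp add: prod_encode_def)
  show ?thesis using n ab pd_sum_eq[of n] by simp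
qed

lemma pd_snd: "snd (prod_decode n) = pd_sum n - fst (prod_decode n)"
  by (simp add: pd_sum_eq)

lemma recfn_pd_sum: "recfn n f \<Longrightarrow> recfn n (\<lambda>xs. pd_sum (f xs))"
proof -
  have h: "recfn (Suc 1) (\<lambda>ys. of_bool (triangle (Suc (ys!0)) \<le> ys!1))"
    using recpred_le[OF recfn_triangle[OF recfn_suc[OF recfn_proj]] recfn_proj, of 0 "Suc 1" 1]
    unfolding recpred_def by simp
  have "recfn 1 (\<lambda>xs. \<Sum>i<xs!0. (\<lambda>ys. of_bool (triangle (Suc (ys!0)) \<le> ys!1)) (i # xs))"
    by (rule recfn_sum[OF h recfn_proj]) simp
  then have "recfn 1 (\<lambda>xs. pd_sum (xs!0))"
    by (rule recfn_cong) (auto simp: pd_sum_def)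
  then show "recfn n f \<Longrightarrow> ?thesis" by (rule recfn_comp1)
qed

lemma recfn_pfst: "recfn n f \<Longrightarrow> recfn n (\<lambda>xs. fst (prod_decode (f xs)))"
  unfolding pd_fst by (intro recfn_sub recfn_triangle recfn_pd_sum)

lemma recfn_psnd: "recfn n f \<Longrightarrow> recfn n (\<lambda>xs. snd (prod_decode (f xs)))"
  unfolding pd_snd by (intro recfn_sub recfn_pfst recfn_pd_sum)




definition ltl :: "nat \<Rightarrow> nat" where "ltl c = snd (prod_decode (c - 1))"
definition lhd :: "nat \<Rightarrow> nat" where "lhd c = fst (prod_decode (c - 1))"
definition ldrop :: "nat \<Rightarrow> nat \<Rightarrow> nat" where "ldrop i c = (ltl ^^ i) c"
definition lnth :: "nat \<Rightarrow> nat \<Rightarrow> nat" where "lnth c i = lhd (ldrop i c)"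
definition llen :: "nat \<Rightarrow> nat" where "llen c = (\<Sum>i<c. of_bool (ldrop i c \<noteq> 0))"

lemma prod_decode_0: "prod_decode 0 = (0, 0)"
  by (simp add: prod_decode_def prod_decode_aux.simps)

lemma list_decode_ltl: "list_decode (ltl c) = tl (list_decode c)"
  by (cases c) (auto simp: ltl_def prod_decode_0 split: prod.splits)

lemma list_decode_eq_Nil: "list_decode c = [] \<longleftrightarrow> c = 0"
  by (cases c) (auto split: prod.splits)

lemma list_decode_ldrop: "list_decode (ldrop i c) = drop i (list_decode c)"
  unfolding ldrop_def
proof (induction i arbitrary: c)
  case (Suc i)
  then show ?case by (simp add: funpow_Suc_right list_decode_ltl drop_Suc del: funpow.simps)
qed simp

lemma lhd_hd: "c \<noteq> 0 \<Longrightarrow> lhd c = hd (list_decode c)"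
  by (cases c) (auto simp: lhd_def split: prod.splits)

lemma lnth_nth: "i < length (list_decode c) \<Longrightarrow> lnth c i = list_decode c ! i"
proof -
  assume i: "i < length (list_decode c)"
  then have "list_decode (ldrop i c) \<noteq> []" by (simp add: list_decode_ldrop)
  then have "ldrop i c \<noteq> 0" by (auto simp: list_decode_eq_Nil)
  then show ?thesis using i by (simp add: lnth_def lhd_hd list_decode_ldrop hd_drop_conv_nth)
qed

lemma length_le_list_encode: "length xs \<le> list_encode xs"
proof (induction xs)
  case (Cons x xs)
  then show ?case using le_prod_encode_2[of "list_encode xs" x] by simp
qed simp

lemma llen_length: "llen c = length (list_decode c)"
proof -
  have le: "length (list_decode c) \<le> c" using length_le_list_encode[of "list_decode c"] by simp
  have "{i. i < c \<and> ldrop i c \<noteq> 0} = {..<length (list_decode c)}"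
    using le by (auto simp flip: list_decode_eq_Nil simp: list_decode_ldrop)
  then show ?thesis unfolding llen_def by (simp add: sum.If_cases Int_def)
qed

lemma recfn_ltl: "recfn n f \<Longrightarrow> recfn n (\<lambda>xs. ltl (f xs))"
  unfolding ltl_def by (intro recfn_psnd recfn_sub recfn_const)

lemma recfn_lhd: "recfn n f \<Longrightarrow> recfn n (\<lambda>xs. lhd (f xs))"
  unfolding lhd_def by (intro recfn_pfst recfn_sub recfn_const)

lemma PR_ldrop: "PR (\<lambda>xs. xs!1) (\<lambda>ys. ltl (ys!1)) k xs = ldrop k (xs!1)"
  by (induction k) (auto simp: ldrop_def)

lemma recfn_ldrop: "recfn n f \<Longrightarrow> recfn n g \<Longrightarrow> recfn n (\<lambda>xs. ldrop (f xs) (g xs))"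
proof -
  have "recfn 2 (\<lambda>xs. ldrop (xs!0) (xs!1))"
  proof (rule recfn_PR[where b="\<lambda>xs. xs!0" and f="\<lambda>xs. xs!1" and g="\<lambda>ys. ltl (ys!1)"])
    show "recfn (Suc (Suc 2)) (\<lambda>ys. ltl (ys!1))" by (rule recfn_ltl, rule recfn_proj) simp
  qed (auto intro: recfn_proj simp only: PR_ldrop)
  then show "recfn n f \<Longrightarrow> recfn n g \<Longrightarrow> ?thesis" by (rule recfn_comp2)
qed

lemma recfn_lnth: "recfn n f \<Longrightarrow> recfn n g \<Longrightarrow> recfn n (\<lambda>xs. lnth (f xs) (g xs))"
  unfolding lnth_def by (intro recfn_lhd recfn_ldrop)

lemma recfn_llen: "recfn n f \<Longrightarrow> recfn n (\<lambda>xs. llen (f xs))"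
proof -
  have h: "recfn (Suc 1) (\<lambda>ys. of_bool (\<not> ldrop (ys!0) (ys!1) = 0))"
    using recpred_not[OF recpred_eq[OF recfn_ldrop[OF recfn_proj recfn_proj] recfn_const, of 0 "Suc 1" 1 0]]
    unfolding recpred_def by simp
  have "recfn 1 (\<lambda>xs. \<Sum>i<xs!0. (\<lambda>ys. of_bool (\<not> ldrop (ys!0) (ys!1) = 0)) (i # xs))"
    by (rule recfn_sum[OF h recfn_proj]) simp
  then have "recfn 1 (\<lambda>xs. llen (xs!0))"
    by (rule recfn_cong) (auto simp: llen_def)
  then show "recfn n f \<Longrightarrow> ?thesis" by (rule recfn_comp1)
qed

lemma PR_build:
  assumes "k \<le> L xs"
  shows "PR (\<lambda>xs. 0) (\<lambda>ys. Suc (prod_encode (h ((L (drop 2 ys) - Suc (ys!0)) # drop 2 ys), ys!1))) k xs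
    = list_encode (map (\<lambda>i. h (i # xs)) [L xs - k..<L xs])"
  using assms
proof (induction k)
  case (Suc k)
  then have lt: "L xs - Suc k < L xs" by simp
  have "Suc (L xs - Suc k) = L xs - k" using Suc.prems by simp
  then have "[L xs - Suc k..<L xs] = (L xs - Suc k) # [L xs - k..<L xs]"
    using upt_conv_Cons[OF lt] by simp
  then show ?case using Suc by simp
qed simp

lemma recfn_build:
  assumes h: "recfn (Suc n) h" and L: "recfn n L"
  shows "recfn n (\<lambda>xs. list_encode (map (\<lambda>i. h (i # xs)) [0..<L xs]))"
proof (rule recfn_PR[OF L recfn_zero])
  let ?fs = "(\<lambda>ys. L (drop 2 ys) - Suc (ys!0)) # map (\<lambda>j ys. ys!(j+2)) [0..<n]"
  have d: "length ys = Suc (Suc n) \<Longrightarrow> map (\<lambda>f. f ys) (map (\<lambda>j ys. ys!(j+2)) [0..<n]) = drop 2 ys" for ys :: "nat list"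
    by (intro nth_equalityI) auto
  have "recfn (Suc (Suc n)) (\<lambda>ys. h (map (\<lambda>f. f ys) ?fs))"
    by (rule recfn_comp[OF h]) (auto intro!: recfn_proj recfn_sub recfn_const recfn_suc recfn_shift1[OF L])
  then have "recfn (Suc (Suc n)) (\<lambda>ys. h ((L (drop 2 ys) - Suc (ys!0)) # drop 2 ys))"
    by (rule recfn_cong) (simp only: list.map d)
  then show "recfn (Suc (Suc n)) (\<lambda>ys. Suc (prod_encode (h ((L (drop 2 ys) - Suc (ys!0)) # drop 2 ys), ys!1)))"
    by (intro recfn_suc recfn_pe recfn_proj) auto
qed (subst PR_build, simp_all)


definition evl :: "'a list \<Rightarrow> 'a list" where
  "evl l = map (\<lambda>i. l ! (2*i)) [0..<(length l + 1) div 2]"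
definition odl :: "'a list \<Rightarrow> 'a list" where
  "odl l = map (\<lambda>i. l ! (2*i+1)) [0..<length l div 2]"

definition levens :: "nat \<Rightarrow> nat" where "levens c = list_encode (evl (list_decode c))"
definition lodds :: "nat \<Rightarrow> nat" where "lodds c = list_encode (odl (list_decode c))"

lemma recfn_levens: "recfn n f \<Longrightarrow> recfn n (\<lambda>xs. levens (f xs))"
proof -
  have "recfn 1 (\<lambda>xs. list_encode (map (\<lambda>i. (\<lambda>ys. lnth (ys!1) (2 * ys!0)) (i # xs)) [0..<(llen (xs!0) + 1) div 2]))"
    by (rule recfn_build) (auto intro!: recfn_lnth recfn_mult recfn_const recfn_proj recfn_div recfn_add recfn_llen recfn_suc)
  then have "recfn 1 (\<lambda>xs. levens (xs!0))"
    by (rule recfn_cong) (auto simp: levens_def evl_def llen_length lnth_nth intro!: arg_cong[where f=list_encode])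
  then show "recfn n f \<Longrightarrow> ?thesis" by (rule recfn_comp1)
qed

lemma recfn_lodds: "recfn n f \<Longrightarrow> recfn n (\<lambda>xs. lodds (f xs))"
proof -
  have "recfn 1 (\<lambda>xs. list_encode (map (\<lambda>i. (\<lambda>ys. lnth (ys!1) (2 * ys!0 + 1)) (i # xs)) [0..<llen (xs!0) div 2]))"
    by (rule recfn_build) (auto intro!: recfn_lnth recfn_mult recfn_const recfn_proj recfn_div recfn_add recfn_llen recfn_suc)
  then have "recfn 1 (\<lambda>xs. lodds (xs!0))"
    by (rule recfn_cong) (auto simp: lodds_def odl_def llen_length lnth_nth intro!: arg_cong[where f=list_encode])
  then show "recfn n f \<Longrightarrow> ?thesis" by (rule recfn_comp1)
qed

definition padv :: "nat list \<Rightarrow> nat \<Rightarrow> nat \<Rightarrow> nat \<Rightarrow> nat" where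
  "padv l j i p = (if i < length l then l ! i else (j div 2 ^ p) mod 2)"

definition pil :: "nat list \<Rightarrow> nat list \<Rightarrow> nat \<Rightarrow> nat list" where
  "pil l1 l2 j = map (\<lambda>i. if i mod 2 = 0 then padv l1 j (i div 2) i else padv l2 j (i div 2) i)
      [0..<2 * max (length l1) (length l2)]"

definition lpil :: "nat \<Rightarrow> nat \<Rightarrow> nat \<Rightarrow> nat" where
  "lpil c1 c2 j = list_encode (pil (list_decode c1) (list_decode c2) j)"

lemma recfn_padv: "recfn n c \<Longrightarrow> recfn n j \<Longrightarrow> recfn n i \<Longrightarrow> recfn n p \<Longrightarrow>
   recfn n (\<lambda>xs. padv (list_decode (c xs)) (j xs) (i xs) (p xs))"
proof -
  assume c: "recfn n c" and j: "recfn n j" and i: "recfn n i" and p: "recfn n p"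
  have "recfn n (\<lambda>xs. if i xs < llen (c xs) then lnth (c xs) (i xs) else (j xs div 2 ^ p xs) mod 2)"
    by (intro recfn_If recpred_less recfn_llen recfn_lnth recfn_mod recfn_div recfn_pow2 recfn_const c j i p)
  then show ?thesis
    by (rule recfn_cong) (auto simp: padv_def llen_length lnth_nth)
qed

lemma recfn_lpil: "recfn n f \<Longrightarrow> recfn n g \<Longrightarrow> recfn n h \<Longrightarrow> recfn n (\<lambda>xs. lpil (f xs) (g xs) (h xs))"
proof -
  have "recfn 3 (\<lambda>xs. list_encode (map (\<lambda>i. (\<lambda>ys. if ys!0 mod 2 = 0 then padv (list_decode (ys!1)) (ys!3) (ys!0 div 2) (ys!0)
      else padv (list_decode (ys!2)) (ys!3) (ys!0 div 2) (ys!0)) (i # xs)) [0..<2 * max (llen (xs!0)) (llen (xs!1))]))"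
  proof (rule recfn_build)
    show "recfn (Suc 3) (\<lambda>ys. if ys!0 mod 2 = 0 then padv (list_decode (ys!1)) (ys!3) (ys!0 div 2) (ys!0)
      else padv (list_decode (ys!2)) (ys!3) (ys!0 div 2) (ys!0))"
      by (intro recfn_If recpred_eq recfn_mod recfn_div recfn_padv recfn_proj recfn_const) auto
    have m: "max a b = (if a \<le> b then b else a)" for a b :: nat by auto
    show "recfn 3 (\<lambda>xs. 2 * max (llen (xs!0)) (llen (xs!1)))"
      unfolding m by (intro recfn_mult recfn_const recfn_If recpred_le recfn_llen recfn_proj) auto
  qed
  then have "recfn 3 (\<lambda>xs. lpil (xs!0) (xs!1) (xs!2))"
    by (rule recfn_cong) (auto simp: lpil_def pil_def llen_length cong: if_cong)
  then show "recfn n f \<Longrightarrow> recfn n g \<Longrightarrow> recfn n h \<Longrightarrow> ?thesis" by (rule recfn_comp3)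
qed

definition lbits :: "nat \<Rightarrow> nat \<Rightarrow> nat" where
  "lbits M j = list_encode (map (\<lambda>i. (j div 2 ^ i) mod 2) [0..<M])"

lemma recfn_lbits: "recfn n f \<Longrightarrow> recfn n g \<Longrightarrow> recfn n (\<lambda>xs. lbits (f xs) (g xs))"
proof -
  have "recfn 2 (\<lambda>xs. list_encode (map (\<lambda>i. (\<lambda>ys. (ys!2 div 2 ^ ys!0) mod 2) (i # xs)) [0..<xs!0]))"
    by (rule recfn_build) (auto intro!: recfn_mod recfn_div recfn_pow2 recfn_const recfn_proj)
  then have "recfn 2 (\<lambda>xs. lbits (xs!0) (xs!1))"
    by (rule recfn_cong) (auto simp: lbits_def)
  then show "recfn n f \<Longrightarrow> recfn n g \<Longrightarrow> ?thesis" by (rule recfn_comp2)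
qed

definition lcond :: "nat \<Rightarrow> nat \<Rightarrow> nat \<Rightarrow> bool" where
  "lcond c1 c2 j \<longleftrightarrow> (\<forall>i<llen c1. lnth c1 i = (j div 2 ^ (2*i)) mod 2)
     \<and> (\<forall>i<llen c2. lnth c2 i = (j div 2 ^ (2*i+1)) mod 2)"

lemma recpred_lcond: "recfn n f \<Longrightarrow> recfn n g \<Longrightarrow> recfn n h \<Longrightarrow> recpred n (\<lambda>xs. lcond (f xs) (g xs) (h xs))"
proof -
  have "recpred 3 (\<lambda>xs. (\<forall>i<llen (xs!0). (\<lambda>ys. lnth (ys!1) (ys!0) = (ys!3 div 2 ^ (2*ys!0)) mod 2) (i # xs))
     \<and> (\<forall>i<llen (xs!1). (\<lambda>ys. lnth (ys!2) (ys!0) = (ys!3 div 2 ^ (2*ys!0+1)) mod 2) (i # xs)))"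
    by (intro recpred_and recpred_all recpred_eq recfn_lnth recfn_mod recfn_div recfn_pow2 recfn_mult
        recfn_add recfn_const recfn_proj recfn_llen) auto
  then have "recpred 3 (\<lambda>xs. lcond (xs!0) (xs!1) (xs!2))"
    by (rule recpred_cong) (auto simp: lcond_def)
  then show "recfn n f \<Longrightarrow> recfn n g \<Longrightarrow> recfn n h \<Longrightarrow> ?thesis"
    unfolding recpred_def by (rule recfn_comp3)
qed

section \<open>Rationals\<close>

definition rnum :: "nat \<Rightarrow> nat" where
  "rnum r = (if fst (prod_decode r) mod 2 = 0 then fst (prod_decode r) div 2 else 0)"
definition rden :: "nat \<Rightarrow> nat" where
  "rden r = Suc (snd (prod_decode r))"
definition radd :: "nat \<Rightarrow> nat \<Rightarrow> nat" where
  "radd r1 r2 = prod_encode (2 * (rnum r1 * rden r2 + rnum r2 * rden r1), rden r1 * rden r2 - 1)"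

lemma recfn_radd: "recfn n f \<Longrightarrow> recfn n g \<Longrightarrow> recfn n (\<lambda>xs. radd (f xs) (g xs))"
proof -
  have a: "recfn n f \<Longrightarrow> recfn n (\<lambda>xs. rnum (f xs))" for n f
    unfolding rnum_def by (intro recfn_If recpred_eq recfn_mod recfn_div recfn_pfst recfn_const)
  have b: "recfn n f \<Longrightarrow> recfn n (\<lambda>xs. rden (f xs))" for n f
    unfolding rden_def by (intro recfn_suc recfn_psnd)
  show "recfn n f \<Longrightarrow> recfn n g \<Longrightarrow> ?thesis"
    unfolding radd_def by (intro recfn_pe recfn_mult recfn_add recfn_sub a b recfn_const)
qed

lemma rat_dec_max: "max 0 (rat_dec r) = of_nat (rnum r) / of_nat (rden r)"
proof -
  obtain a b where ab: "prod_decode r = (a, b)" by fastforce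
  show ?thesis
  proof (cases "a mod 2 = 0")
    case True
    then have "int_decode a = int (a div 2)" by (auto simp: int_decode_def sum_decode_def)
    then show ?thesis using True by (simp add: rat_dec_def ab rnum_def rden_def)
  next
    case False
    then have "int_decode a < 0" by (auto simp: int_decode_def sum_decode_def)
    then have "rat_dec r \<le> 0" by (simp add: rat_dec_def ab divide_nonpos_pos)
    then show ?thesis using False by (simp add: rnum_def ab)
  qed
qed

lemma rat_dec_radd: "rat_dec (radd r1 r2) = max 0 (rat_dec r1) + max 0 (rat_dec r2)"
proof -
  have d1: "rden r1 > 0" and d2: "rden r2 > 0" by (auto simp: rden_def)
  have "int_decode (2 * (rnum r1 * rden r2 + rnum r2 * rden r1)) = int (rnum r1 * rden r2 + rnum r2 * rden r1)"
    by (simp add: int_decode_def sum_decode_def)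
  moreover have "Suc 0 \<le> rden r1 * rden r2" using d1 d2 by (simp add: Suc_le_eq)
  ultimately have "rat_dec (radd r1 r2) = of_nat (rnum r1 * rden r2 + rnum r2 * rden r1) / of_nat (rden r1 * rden r2)"
    by (simp add: rat_dec_def radd_def of_nat_diff)
  also have "\<dots> = of_nat (rnum r1) / of_nat (rden r1) + of_nat (rnum r2) / of_nat (rden r2)"
    using d1 d2 by (simp add: field_simps)
  finally show ?thesis by (simp add: rat_dec_max)
qed

lemma rat_dec_0: "rat_dec 0 = 0"
  by (simp add: rat_dec_def prod_decode_0 int_decode_def sum_decode_def)

definition rsum :: "(nat \<Rightarrow> nat) \<Rightarrow> nat \<Rightarrow> nat" where
  "rsum F k = rec_nat 0 (\<lambda>i acc. radd acc (F i)) k"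

lemma rsum_Suc: "rsum F (Suc k) = radd (rsum F k) (F k)" by (simp add: rsum_def)
lemma rsum_0: "rsum F 0 = 0" by (simp add: rsum_def)

lemma rat_dec_rsum: "rat_dec (rsum F k) = (\<Sum>i<k. max 0 (rat_dec (F i)))"
proof (induction k)
  case (Suc k)
  have "max 0 (rat_dec (rsum F k)) = rat_dec (rsum F k)"
    by (cases k) (simp_all add: rsum_0 rat_dec_0 rsum_Suc rat_dec_radd)
  then show ?case by (simp add: rsum_Suc rat_dec_radd Suc)
qed (simp add: rsum_0 rat_dec_0)

lemma PR_rsum: "PR (\<lambda>xs. 0) (\<lambda>ys. radd (ys!1) (F (ys!0 # drop 2 ys))) k xs = rsum (\<lambda>i. F (i # xs)) k"
  by (induction k) (simp_all add: rsum_0 rsum_Suc)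

lemma recfn_rsum:
  assumes F: "recfn (Suc n) F" and b: "recfn n b"
  shows "recfn n (\<lambda>xs. rsum (\<lambda>i. F (i # xs)) (b xs))"
proof (rule recfn_PR[OF b recfn_zero])
  show "recfn (Suc (Suc n)) (\<lambda>ys. radd (ys!1) (F (ys!0 # drop 2 ys)))"
    by (rule recfn_radd[OF recfn_proj recfn_shift2[OF F]]) simp
qed (simp only: PR_rsum)




lemma space_cantor: "space cantor_space = UNIV"
  by (simp add: cantor_space_def space_PiM PiE_UNIV_domain)

lemma sets_coord: "{X. X i = b} \<in> sets cantor_space"
proof -
  have "(\<lambda>X. X i) \<in> measurable cantor_space (count_space UNIV)"
    unfolding cantor_space_def by (rule measurable_component_singleton) simp
  then have "(\<lambda>X. X i) -` {b} \<inter> space cantor_space \<in> sets cantor_space"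
    by (rule measurable_sets) simp
  then show ?thesis by (simp add: space_cantor vimage_def)
qed

lemma sets_cyl[measurable]: "cyl \<sigma> \<in> sets cantor_space"
proof -
  have "{X \<in> space cantor_space. \<forall>i\<in>{..<length \<sigma>}. X i = \<sigma> ! i} \<in> sets cantor_space"
    by (rule sets.sets_Collect_finite_All) (auto simp: space_cantor sets_coord)
  then show ?thesis by (simp add: cyl_def space_cantor lessThan_iff Ball_def)
qed

lemma coord_measurable[measurable]: "(\<lambda>X. X i) \<in> measurable cantor_space (count_space UNIV)"
  unfolding cantor_space_def by (rule measurable_component_singleton) simp

lemma measurable_into_cantor:
  assumes "\<And>i. (\<lambda>x. f x i) \<in> measurable M (count_space UNIV)"
  shows "f \<in> measurable M cantor_space"
  unfolding cantor_space_def
  by (rule measurable_PiM_single') (use assms in \<open>auto simp: space_PiM PiE_UNIV_domain\<close>)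

definition unjoin :: "cantor \<Rightarrow> cantor \<times> cantor" where
  "unjoin Z = ((\<lambda>n. Z (2*n)), (\<lambda>n. Z (2*n+1)))"

definition joinp :: "cantor \<times> cantor \<Rightarrow> cantor" where
  "joinp = (\<lambda>(A, B). join A B)"

lemma joinp_unjoin[simp]: "joinp (unjoin Z) = Z"
  by (auto simp: joinp_def unjoin_def join_def fun_eq_iff)

lemma unjoin_joinp[simp]: "unjoin (joinp p) = p"
  by (cases p) (auto simp: joinp_def unjoin_def join_def fun_eq_iff)

lemma unjoin_measurable[measurable]: "unjoin \<in> measurable cantor_space (cantor_space \<Otimes>\<^sub>M cantor_space)"
  unfolding unjoin_def
  by (intro measurable_Pair measurable_into_cantor) simp_all

lemma joinp_measurable[measurable]: "joinp \<in> measurable (cantor_space \<Otimes>\<^sub>M cantor_space) cantor_space"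
proof (rule measurable_into_cantor)
  fix i
  show "(\<lambda>x. joinp x i) \<in> measurable (cantor_space \<Otimes>\<^sub>M cantor_space) (count_space UNIV)"
  proof (cases "even i")
    case True
    then have "(\<lambda>x. joinp x i) = (\<lambda>x. fst x (i div 2))" by (auto simp: joinp_def join_def)
    then show ?thesis by simp
  next
    case False
    then have "(\<lambda>x. joinp x i) = (\<lambda>x. snd x (i div 2))" by (auto simp: joinp_def join_def)
    then show ?thesis by simp
  qed
qed

lemma join_in_cyl: "join A B \<in> cyl \<rho> \<longleftrightarrow> A \<in> cyl (evl \<rho>) \<and> B \<in> cyl (odl \<rho>)"
proof
  assume "join A B \<in> cyl \<rho>"
  then have h: "\<And>i. i < length \<rho> \<Longrightarrow> join A B i = \<rho> ! i" by (auto simp: cyl_def)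
  have "A \<in> cyl (evl \<rho>)"
  proof (clarsimp simp: cyl_def evl_def)
    fix i assume "i < Suc (length \<rho>) div 2"
    then have "2*i < length \<rho>" by linarith
    from h[OF this] show "A i = \<rho> ! (2*i)" by (simp add: join_def)
  qed
  moreover have "B \<in> cyl (odl \<rho>)"
  proof (clarsimp simp: cyl_def odl_def)
    fix i assume "i < length \<rho> div 2"
    then have "2*i+1 < length \<rho>" by linarith
    from h[OF this] show "B i = \<rho> ! Suc (2*i)" by (simp add: join_def)
  qed
  ultimately show "A \<in> cyl (evl \<rho>) \<and> B \<in> cyl (odl \<rho>)" ..
next
  assume a: "A \<in> cyl (evl \<rho>) \<and> B \<in> cyl (odl \<rho>)"
  show "join A B \<in> cyl \<rho>"
  proof (clarsimp simp: cyl_def)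
    fix i assume i: "i < length \<rho>"
    show "join A B i = \<rho> ! i"
    proof (cases "even i")
      case True
      then obtain k where k: "i = 2*k" by blast
      then have "k < (length \<rho> + 1) div 2" using i by linarith
      then show ?thesis using a k by (auto simp: cyl_def evl_def join_def)
    next
      case False
      then obtain k where k: "i = 2*k+1" using oddE by blast
      then have "k < length \<rho> div 2" using i by linarith
      then show ?thesis using a k by (auto simp: cyl_def odl_def join_def)
    qed
  qed
qed


definition cnd :: "bool list \<Rightarrow> bool list \<Rightarrow> bool list \<Rightarrow> bool" where
  "cnd \<sigma> \<tau> \<rho> \<longleftrightarrow> (\<forall>i<length \<sigma>. \<rho>!(2*i) = \<sigma>!i) \<and> (\<forall>i<length \<tau>. \<rho>!(2*i+1) = \<tau>!i)"

definition LL :: "bool list \<Rightarrow> bool list \<Rightarrow> nat" where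
  "LL \<sigma> \<tau> = 2 * max (length \<sigma>) (length \<tau>)"

definition RR :: "bool list \<Rightarrow> bool list \<Rightarrow> bool list set" where
  "RR \<sigma> \<tau> = {\<rho>. length \<rho> = LL \<sigma> \<tau> \<and> cnd \<sigma> \<tau> \<rho>}"

lemma finite_RR: "finite (RR \<sigma> \<tau>)"
  unfolding RR_def by (rule finite_subset[OF _ finite_lists_length_eq[of "UNIV :: bool set" "LL \<sigma> \<tau>"]]) auto

lemma disjoint_cyl: "disjoint_family_on cyl {\<rho>. length \<rho> = M}"
proof (unfold disjoint_family_on_def, intro ballI impI)
  fix \<rho> \<rho>' :: "bool list" assume "\<rho> \<in> {\<rho>. length \<rho> = M}" "\<rho>' \<in> {\<rho>. length \<rho> = M}" "\<rho> \<noteq> \<rho>'"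
  then have l: "length \<rho> = M" "length \<rho>' = M" "\<rho> \<noteq> \<rho>'" by auto
  have "\<exists>i<M. \<rho> ! i \<noteq> \<rho>' ! i"
  proof (rule ccontr)
    assume "\<not> (\<exists>i<M. \<rho> ! i \<noteq> \<rho>' ! i)"
    then have "\<rho> = \<rho>'" using l by (auto intro: nth_equalityI)
    then show False using l by simp
  qed
  then obtain i where i: "i < M" "\<rho> ! i \<noteq> \<rho>' ! i" by blast
  show "cyl \<rho> \<inter> cyl \<rho>' = {}" using i l by (auto simp: cyl_def)
qed

lemma disjoint_RR: "disjoint_family_on cyl (RR \<sigma> \<tau>)"
  using disjoint_cyl by (rule disjoint_family_on_mono[rotated]) (auto simp: RR_def)

lemma unjoin_vimage: "unjoin -` (cyl \<sigma> \<times> cyl \<tau>) = (\<Union>\<rho>\<in>RR \<sigma> \<tau>. cyl \<rho>)"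
proof (rule set_eqI, rule iffI)
  fix Z assume "Z \<in> unjoin -` (cyl \<sigma> \<times> cyl \<tau>)"
  then have Z: "\<And>i. i < length \<sigma> \<Longrightarrow> Z (2*i) = \<sigma>!i" "\<And>i. i < length \<tau> \<Longrightarrow> Z (2*i+1) = \<tau>!i"
    by (auto simp: unjoin_def cyl_def)
  let ?\<rho> = "map Z [0..<LL \<sigma> \<tau>]"
  have "?\<rho> \<in> RR \<sigma> \<tau>" using Z by (auto simp: RR_def cnd_def LL_def nth_append)
  moreover have "Z \<in> cyl ?\<rho>" by (simp add: cyl_def)
  ultimately show "Z \<in> (\<Union>\<rho>\<in>RR \<sigma> \<tau>. cyl \<rho>)" by blast
next
  fix Z assume "Z \<in> (\<Union>\<rho>\<in>RR \<sigma> \<tau>. cyl \<rho>)"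
  then obtain \<rho> where r: "\<rho> \<in> RR \<sigma> \<tau>" "Z \<in> cyl \<rho>" by blast
  have a: "Z (2*i) = \<sigma>!i" if "i < length \<sigma>" for i
  proof -
    have "2*i < length \<rho>" using that r by (auto simp: RR_def LL_def)
    then show ?thesis using r that by (auto simp: cyl_def RR_def cnd_def)
  qed
  have b: "Z (2*i+1) = \<tau>!i" if "i < length \<tau>" for i
  proof -
    have "2*i+1 < length \<rho>" using that r by (auto simp: RR_def LL_def)
    then show ?thesis using r that by (auto simp: cyl_def RR_def cnd_def)
  qed
  show "Z \<in> unjoin -` (cyl \<sigma> \<times> cyl \<tau>)" using a b by (auto simp: unjoin_def cyl_def)
qed

lemma emeasure_unjoin_vimage:
  assumes "sets \<nu> = sets cantor_space"
  shows "emeasure \<nu> (unjoin -` (cyl \<sigma> \<times> cyl \<tau>)) = (\<Sum>\<rho>\<in>RR \<sigma> \<tau>. emeasure \<nu> (cyl \<rho>))"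
  unfolding unjoin_vimage
  by (rule sum_emeasure[symmetric]) (use assms finite_RR disjoint_RR in auto)

lemma emeasure_distr_unjoin:
  assumes "sets \<nu> = sets cantor_space"
  shows "emeasure (distr \<nu> (cantor_space \<Otimes>\<^sub>M cantor_space) unjoin) (cyl \<sigma> \<times> cyl \<tau>)
     = (\<Sum>\<rho>\<in>RR \<sigma> \<tau>. emeasure \<nu> (cyl \<rho>))"
proof -
  have sp: "space \<nu> = UNIV" using sets_eq_imp_space_eq[OF assms] space_cantor by simp
  have m: "unjoin \<in> measurable \<nu> (cantor_space \<Otimes>\<^sub>M cantor_space)"
    using measurable_cong_sets[OF assms refl] unjoin_measurable by blast
  have "cyl \<sigma> \<times> cyl \<tau> \<in> sets (cantor_space \<Otimes>\<^sub>M cantor_space)" by simp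
  then show ?thesis
    using emeasure_distr[OF m] emeasure_unjoin_vimage[OF assms] sp by simp
qed

lemma emeasure_distr_joinp:
  assumes "sets \<nu> = sets (cantor_space \<Otimes>\<^sub>M cantor_space)"
  shows "emeasure (distr \<nu> cantor_space joinp) (cyl \<rho>) = emeasure \<nu> (cyl (evl \<rho>) \<times> cyl (odl \<rho>))"
proof -
  have sp: "space \<nu> = UNIV" using sets_eq_imp_space_eq[OF assms] space_cantor
    by (simp add: space_pair_measure)
  have m: "joinp \<in> measurable \<nu> cantor_space"
    using measurable_cong_sets[OF assms refl] joinp_measurable by blast
  have "joinp -` cyl \<rho> = cyl (evl \<rho>) \<times> cyl (odl \<rho>)"
    by (auto simp: joinp_def join_in_cyl)
  then show ?thesis using emeasure_distr[OF m sets_cyl] sp by simp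
qed

lemma nn_integral_joinp_cyl:
  assumes "sets \<mu> = sets (cantor_space \<Otimes>\<^sub>M cantor_space)" and t: "t \<in> borel_measurable cantor_space"
  shows "(\<integral>\<^sup>+ Z \<in> cyl \<rho>. t Z \<partial>distr \<mu> cantor_space joinp)
       = (\<integral>\<^sup>+ z \<in> cyl (evl \<rho>) \<times> cyl (odl \<rho>). t (joinp z) \<partial>\<mu>)"
proof -
  have m: "joinp \<in> measurable \<mu> cantor_space"
    using measurable_cong_sets[OF assms(1) refl] joinp_measurable by blast
  have "(\<integral>\<^sup>+ Z \<in> cyl \<rho>. t Z \<partial>distr \<mu> cantor_space joinp) = (\<integral>\<^sup>+ z. t (joinp z) * indicator (cyl \<rho>) (joinp z) \<partial>\<mu>)"
    by (rule nn_integral_distr[OF m]) (use t in simp)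
  also have "\<dots> = (\<integral>\<^sup>+ z \<in> cyl (evl \<rho>) \<times> cyl (odl \<rho>). t (joinp z) \<partial>\<mu>)"
    by (rule nn_integral_cong) (auto simp: indicator_def joinp_def join_in_cyl)
  finally show ?thesis .
qed

lemma nn_integral_unjoin_cyl:
  assumes "sets \<mu> = sets (cantor_space \<Otimes>\<^sub>M cantor_space)" and t: "t \<in> borel_measurable cantor_space"
  shows "(\<integral>\<^sup>+ z \<in> cyl \<sigma> \<times> cyl \<tau>. t (joinp z) \<partial>\<mu>)
       = (\<Sum>\<rho>\<in>RR \<sigma> \<tau>. \<integral>\<^sup>+ Z \<in> cyl \<rho>. t Z \<partial>distr \<mu> cantor_space joinp)"
proof -
  have m: "joinp \<in> measurable \<mu> cantor_space"
    using measurable_cong_sets[OF assms(1) refl] joinp_measurable by blast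
  have "(\<integral>\<^sup>+ z \<in> cyl \<sigma> \<times> cyl \<tau>. t (joinp z) \<partial>\<mu>)
      = (\<integral>\<^sup>+ z. t (joinp z) * indicator (unjoin -` (cyl \<sigma> \<times> cyl \<tau>)) (joinp z) \<partial>\<mu>)"
    by (rule nn_integral_cong) (auto simp: indicator_def)
  also have "\<dots> = (\<integral>\<^sup>+ Z. t Z * indicator (unjoin -` (cyl \<sigma> \<times> cyl \<tau>)) Z \<partial>distr \<mu> cantor_space joinp)"
    by (rule nn_integral_distr[OF m, symmetric]) (use t in \<open>simp add: unjoin_vimage\<close>)
  also have "\<dots> = (\<integral>\<^sup>+ Z. (\<Sum>\<rho>\<in>RR \<sigma> \<tau>. t Z * indicator (cyl \<rho>) Z) \<partial>distr \<mu> cantor_space joinp)"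
    unfolding unjoin_vimage
    by (rule nn_integral_cong) (simp add: indicator_UN_disjoint[OF finite_RR disjoint_RR] sum_distrib_left)
  also have "\<dots> = (\<Sum>\<rho>\<in>RR \<sigma> \<tau>. \<integral>\<^sup>+ Z \<in> cyl \<rho>. t Z \<partial>distr \<mu> cantor_space joinp)"
    by (rule nn_integral_sum) (use t in simp)
  finally show ?thesis .
qed




lemma computable_recfn: "computable f \<Longrightarrow> recfn 1 (\<lambda>xs. f (xs!0))"
proof -
  assume "computable f"
  then obtain r where r: "\<And>n. eval_recf r [n] (f n)" unfolding computable_def by blast
  show ?thesis unfolding recfn_def
  proof (intro exI allI impI)
    fix xs :: "nat list" assume "length xs = 1"
    then have "xs = [xs!0]" by (cases xs) auto
    then show "eval_recf r xs (f (xs!0))" using r by metis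
  qed
qed

lemma recfn_computable: "recfn 1 (\<lambda>xs. F (xs!0)) \<Longrightarrow> computable F"
  unfolding recfn_def computable_def by (metis length_Cons list.size(3) nth_Cons_0 One_nat_def)

lemma recfn_app: "computable f \<Longrightarrow> recfn n g \<Longrightarrow> recfn n (\<lambda>xs. f (g xs))"
  by (rule recfn_comp1[OF computable_recfn])

lemma list_decode_str: "list_decode (str_code \<sigma>) = map of_bool \<sigma>"
  by (simp add: str_code_def)

lemma str_code_inj: "str_code \<sigma> = str_code \<tau> \<longleftrightarrow> \<sigma> = \<tau>"
proof
  assume "str_code \<sigma> = str_code \<tau>"
  then have "map (of_bool :: bool \<Rightarrow> nat) \<sigma> = map of_bool \<tau>" by (metis list_decode_str)
  moreover have "inj (of_bool :: bool \<Rightarrow> nat)" by (auto simp: inj_def)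
  ultimately show "\<sigma> = \<tau>" using inj_map_eq_map by blast
qed simp

lemma llen_str: "llen (str_code \<sigma>) = length \<sigma>"
  by (simp add: llen_length list_decode_str)

lemma lnth_str: "i < length \<sigma> \<Longrightarrow> lnth (str_code \<sigma>) i = of_bool (\<sigma>!i)"
  by (simp add: lnth_nth list_decode_str)

lemma evl_map: "evl (map f l) = map f (evl l)"
  by (simp add: evl_def)

lemma odl_map: "odl (map f l) = map f (odl l)"
  by (simp add: odl_def)

lemma levens_str: "levens (str_code \<rho>) = str_code (evl \<rho>)"
  by (simp add: levens_def list_decode_str evl_map str_code_def)

lemma lodds_str: "lodds (str_code \<rho>) = str_code (odl \<rho>)"
  by (simp add: lodds_def list_decode_str odl_map str_code_def)

lemma SUP_filter_ennreal:
  fixes f :: "'a \<Rightarrow> ennreal"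
  shows "(SUP p \<in> {p \<in> E. P p}. f p) = (SUP p \<in> E. if P p then f p else 0)"
proof (rule antisym)
  show "(SUP p \<in> {p \<in> E. P p}. f p) \<le> (SUP p \<in> E. if P p then f p else 0)"
  proof (rule SUP_least)
    fix p assume "p \<in> {p \<in> E. P p}"
    then have "p \<in> E" "P p" by auto
    then show "f p \<le> (SUP p \<in> E. if P p then f p else 0)"
      using SUP_upper[of p E "\<lambda>p. if P p then f p else 0"] by simp
  qed
  show "(SUP p \<in> E. if P p then f p else 0) \<le> (SUP p \<in> {p \<in> E. P p}. f p)"
    by (rule SUP_least) (auto intro: SUP_upper)
qed

lemma lsc_measurable:
  assumes "lsc t" shows "t \<in> borel_measurable cantor_space"
proof -
  obtain g where "computable g" and g': "\<forall>X. t X = (SUP p \<in> {(\<sigma>, k). (\<exists>n. g n = prod_encode (str_code \<sigma>, k)) \<and> X \<in> cyl \<sigma>}.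
        ennreal (real_of_rat (rat_dec (snd p))))" using assms unfolding lsc_def by blast
  note g = g'[rule_format]
  define E where "E = {(\<sigma>::bool list, k::nat). \<exists>n. g n = prod_encode (str_code \<sigma>, k)}"
  have "t X = (SUP p \<in> E. if X \<in> cyl (fst p) then ennreal (real_of_rat (rat_dec (snd p))) else 0)" for X
  proof -
    have "{(\<sigma>, k). (\<exists>n. g n = prod_encode (str_code \<sigma>, k)) \<and> X \<in> cyl \<sigma>} = {p \<in> E. X \<in> cyl (fst p)}"
      by (auto simp: E_def)
    then show ?thesis by (simp add: g SUP_filter_ennreal)
  qed
  then have t: "t = (\<lambda>X. SUP p \<in> E. if X \<in> cyl (fst p) then ennreal (real_of_rat (rat_dec (snd p))) else 0)"
    by (rule ext)
  show ?thesis unfolding t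
    by (rule borel_measurable_SUP) (simp_all add: countableI_type)
qed

lemma lsc2_measurable:
  assumes "lsc2 t" shows "t \<in> borel_measurable (cantor_space \<Otimes>\<^sub>M cantor_space)"
proof -
  obtain g where "computable g" and g': "\<forall>X Y. t (X, Y) = (SUP p \<in> {(\<sigma>, \<tau>, k). (\<exists>n. g n = prod_encode (str_code \<sigma>, prod_encode (str_code \<tau>, k)))
                 \<and> X \<in> cyl \<sigma> \<and> Y \<in> cyl \<tau>}.
        ennreal (real_of_rat (rat_dec (snd (snd p)))))" using assms unfolding lsc2_def by blast
  note g = g'[rule_format]
  define E where "E = {(\<sigma>::bool list, \<tau>::bool list, k::nat). \<exists>n. g n = prod_encode (str_code \<sigma>, prod_encode (str_code \<tau>, k))}"
  have "t z = (SUP p \<in> E. if z \<in> cyl (fst p) \<times> cyl (fst (snd p)) then ennreal (real_of_rat (rat_dec (snd (snd p)))) else 0)" for z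
  proof -
    obtain X Y where z: "z = (X, Y)" by fastforce
    have "{(\<sigma>, \<tau>, k). (\<exists>n. g n = prod_encode (str_code \<sigma>, prod_encode (str_code \<tau>, k))) \<and> X \<in> cyl \<sigma> \<and> Y \<in> cyl \<tau>}
       = {p \<in> E. z \<in> cyl (fst p) \<times> cyl (fst (snd p))}"
      by (auto simp: E_def z)
    then show ?thesis by (simp add: z g SUP_filter_ennreal)
  qed
  then have t: "t = (\<lambda>z. SUP p \<in> E. if z \<in> cyl (fst p) \<times> cyl (fst (snd p)) then ennreal (real_of_rat (rat_dec (snd (snd p)))) else 0)"
    by (rule ext)
  show ?thesis unfolding t
    by (rule borel_measurable_SUP) (simp_all add: countableI_type)
qed

section \<open>Bits\<close>

definition bitsl :: "nat \<Rightarrow> nat \<Rightarrow> bool list" where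
  "bitsl M j = map (bit j) [0..<M]"

lemma bit_mod: "(j div 2 ^ i) mod 2 = (of_bool (bit j i) :: nat)"
  by (simp add: bit_iff_odd odd_iff_mod_2_eq_one)

lemma lbits_str: "lbits M j = str_code (bitsl M j)"
  by (simp add: lbits_def str_code_def bitsl_def bit_mod comp_def)

lemma bij_bitsl: "bij_betw (bitsl M) {..<2^M} {l. length l = M}"
proof (rule bij_betw_byWitness[where f'="horner_sum of_bool 2"])
  show "\<forall>j\<in>{..<2^M}. horner_sum of_bool 2 (bitsl M j) = j"
    by (auto simp: bitsl_def horner_sum_bit_eq_take_bit take_bit_nat_eq_self_iff)
  show "\<forall>l\<in>{l. length l = M}. bitsl M (horner_sum of_bool 2 l) = l"
    by (auto simp: bitsl_def bit_horner_sum_bit_iff intro!: nth_equalityI)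
  show "bitsl M ` {..<2^M} \<subseteq> {l. length l = M}" by (auto simp: bitsl_def)
  show "horner_sum of_bool 2 ` {l. length l = M} \<subseteq> {..<2^M :: nat}"
  proof
    fix x :: nat assume "x \<in> horner_sum of_bool 2 ` {l. length l = M}"
    then obtain l :: "bool list" where l: "length l = M" "x = horner_sum of_bool 2 l" by auto
    have "horner_sum of_bool 2 l = take_bit M (horner_sum of_bool 2 l :: nat)"
      using l by (simp add: take_bit_horner_sum_bit_eq)
    also have "\<dots> < 2 ^ M" by (rule take_bit_nat_less_exp)
    finally show "x \<in> {..<2^M :: nat}" using l by simp
  qed
qed

lemma finite_len: "finite {l :: bool list. length l = M}"
  using finite_lists_length_eq[of "UNIV :: bool set" M] by simp

lemma sum_RR:
  "(\<Sum>\<rho>\<in>RR \<sigma> \<tau>. F \<rho>) = (\<Sum>j<2 ^ LL \<sigma> \<tau>. if cnd \<sigma> \<tau> (bitsl (LL \<sigma> \<tau>) j) then F (bitsl (LL \<sigma> \<tau>) j) else 0)"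
proof -
  have "(\<Sum>\<rho>\<in>RR \<sigma> \<tau>. F \<rho>) = (\<Sum>\<rho>\<in>{l. length l = LL \<sigma> \<tau>}. if cnd \<sigma> \<tau> \<rho> then F \<rho> else 0)"
  proof -
    have "RR \<sigma> \<tau> = {\<rho> \<in> {l. length l = LL \<sigma> \<tau>}. cnd \<sigma> \<tau> \<rho>}" by (auto simp: RR_def)
    then show ?thesis by (simp only: sum.inter_filter[OF finite_len])
  qed
  also have "\<dots> = (\<Sum>j<2 ^ LL \<sigma> \<tau>. if cnd \<sigma> \<tau> (bitsl (LL \<sigma> \<tau>) j) then F (bitsl (LL \<sigma> \<tau>) j) else 0)"
    by (rule sum.reindex_bij_betw[OF bij_bitsl, symmetric])
  finally show ?thesis .
qed

lemma lcond_str: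
  assumes "M = LL \<sigma> \<tau>"
  shows "lcond (str_code \<sigma>) (str_code \<tau>) j \<longleftrightarrow> cnd \<sigma> \<tau> (bitsl M j)"
proof -
  have a: "2*i < M" if "i < length \<sigma>" for i using that assms by (auto simp: LL_def)
  have b: "2*i+1 < M" if "i < length \<tau>" for i using that assms by (auto simp: LL_def)
  show ?thesis
    unfolding lcond_def cnd_def llen_str bit_mod
    using a b by (auto simp: lnth_str bitsl_def)
qed




lemma evl_odl_bool:
  fixes l :: "nat list"
  assumes e: "evl l = map of_bool \<sigma>" and o: "odl l = map of_bool \<tau>"
  shows "\<exists>\<rho>. l = map of_bool \<rho> \<and> evl \<rho> = \<sigma> \<and> odl \<rho> = \<tau>"
proof -
  have b: "l ! i = 0 \<or> l ! i = 1" if i: "i < length l" for i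
  proof (cases "even i")
    case True
    then obtain k where k: "i = 2*k" by blast
    then have "k < (length l + 1) div 2" using i by linarith
    then have "evl l ! k = l ! i" using k by (simp add: evl_def)
    moreover have "k < length \<sigma>" using \<open>k < (length l + 1) div 2\<close> arg_cong[OF e, of length] by (simp add: evl_def)
    ultimately have "l ! i = of_bool (\<sigma> ! k)" using e by (metis nth_map)
    then show ?thesis by (cases "\<sigma> ! k") simp_all
  next
    case False
    then obtain k where k: "i = 2*k+1" using oddE by blast
    then have "k < length l div 2" using i by linarith
    then have "odl l ! k = l ! i" using k by (simp add: odl_def)
    moreover have "k < length \<tau>" using \<open>k < length l div 2\<close> arg_cong[OF o, of length] by (simp add: odl_def)
    ultimately have "l ! i = of_bool (\<tau> ! k)" using o by (metis nth_map)
    then show ?thesis by (cases "\<tau> ! k") simp_all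
  qed
  define \<rho> where "\<rho> = map (\<lambda>x. x \<noteq> 0) l"
  have l: "l = map of_bool \<rho>"
    unfolding \<rho>_def by (rule nth_equalityI) (use b in force)+
  have inj: "inj (of_bool :: bool \<Rightarrow> nat)" by (auto simp: inj_def)
  have "map (of_bool :: bool \<Rightarrow> nat) (evl \<rho>) = map (of_bool :: bool \<Rightarrow> nat) \<sigma>" using e l by (simp add: evl_map)
  then have "evl \<rho> = \<sigma>" using inj inj_map_eq_map by blast
  moreover have "map (of_bool :: bool \<Rightarrow> nat) (odl \<rho>) = map (of_bool :: bool \<Rightarrow> nat) \<tau>" using o l by (simp add: odl_map)
  then have "odl \<rho> = \<tau>" using inj inj_map_eq_map by blast
  ultimately show ?thesis using l by blast
qed

lemma real_of_rat_max0: "real_of_rat (max 0 q) = max 0 (real_of_rat q)"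
  by (simp add: max_def of_rat_less_eq)

lemma abs_max0: "(m::real) \<ge> 0 \<Longrightarrow> \<bar>max 0 x - m\<bar> \<le> \<bar>x - m\<bar>"
  by (cases "x \<le> 0") (auto simp: max_def)

lemma dirA:
  assumes mu: "computable_measure2 \<mu>" and R: "comp_random2 \<mu> (X, Y)"
  shows "comp_random (distr \<mu> cantor_space joinp) (join X Y)"
  unfolding comp_random_def
proof (intro allI impI, elim conjE)
  fix t \<nu> assume lt: "lsc t" and cn: "computable_measure \<nu>"
    and H: "\<forall>\<rho>. (\<integral>\<^sup>+ Z \<in> cyl \<rho>. t Z \<partial>distr \<mu> cantor_space joinp) \<le> emeasure \<nu> (cyl \<rho>)"
  have smu: "sets \<mu> = sets (cantor_space \<Otimes>\<^sub>M cantor_space)" using mu by (simp add: computable_measure2_def)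
  have snu: "sets \<nu> = sets cantor_space" using cn by (simp add: computable_measure_def)
  have tm: "t \<in> borel_measurable cantor_space" by (rule lsc_measurable[OF lt])
  define t' where "t' = (\<lambda>z. t (joinp z))"
  define \<nu>' where "\<nu>' = distr \<nu> (cantor_space \<Otimes>\<^sub>M cantor_space) unjoin"
  have em: "emeasure \<nu>' (cyl \<sigma> \<times> cyl \<tau>) = (\<Sum>\<rho>\<in>RR \<sigma> \<tau>. emeasure \<nu> (cyl \<rho>))" for \<sigma> \<tau>
    unfolding \<nu>'_def by (rule emeasure_distr_unjoin[OF snu])
  have "lsc2 t'"
  proof -
    obtain g where gc: "computable g" and g': "\<forall>Z. t Z = (SUP p \<in> {(\<rho>, k). (\<exists>n. g n = prod_encode (str_code \<rho>, k)) \<and> Z \<in> cyl \<rho>}.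
        ennreal (real_of_rat (rat_dec (snd p))))" using lt unfolding lsc_def by blast
    define g2 where "g2 n = prod_encode (levens (fst (prod_decode (g n))),
        prod_encode (lodds (fst (prod_decode (g n))), snd (prod_decode (g n))))" for n
    have "recfn 1 (\<lambda>xs. g2 (xs!0))" unfolding g2_def
      by (intro recfn_pe recfn_levens recfn_lodds recfn_pfst recfn_psnd recfn_app[OF gc] recfn_proj) simp_all
    then have g2c: "computable g2" by (rule recfn_computable)
    have "t' (A, B) = (SUP p \<in> {(\<sigma>, \<tau>, k). (\<exists>n. g2 n = prod_encode (str_code \<sigma>, prod_encode (str_code \<tau>, k)))
                 \<and> A \<in> cyl \<sigma> \<and> B \<in> cyl \<tau>}. ennreal (real_of_rat (rat_dec (snd (snd p)))))" for A B
    proof -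
      have "t' (A, B) = (SUP p \<in> {(\<rho>, k). (\<exists>n. g n = prod_encode (str_code \<rho>, k)) \<and> join A B \<in> cyl \<rho>}.
        ennreal (real_of_rat (rat_dec (snd p))))" using g' by (simp add: t'_def joinp_def)
      also have "\<dots> = (SUP p \<in> {(\<sigma>, \<tau>, k). (\<exists>n. g2 n = prod_encode (str_code \<sigma>, prod_encode (str_code \<tau>, k)))
                 \<and> A \<in> cyl \<sigma> \<and> B \<in> cyl \<tau>}. ennreal (real_of_rat (rat_dec (snd (snd p)))))"
      proof (rule SUP_eq)
        fix p assume "p \<in> {(\<rho>, k). (\<exists>n. g n = prod_encode (str_code \<rho>, k)) \<and> join A B \<in> cyl \<rho>}"
        then obtain \<rho> k n where p: "p = (\<rho>, k)" "g n = prod_encode (str_code \<rho>, k)" "join A B \<in> cyl \<rho>" by blast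
        have "g2 n = prod_encode (str_code (evl \<rho>), prod_encode (str_code (odl \<rho>), k))"
          using p by (simp add: g2_def levens_str lodds_str)
        then have "(evl \<rho>, odl \<rho>, k) \<in> {(\<sigma>, \<tau>, k). (\<exists>n. g2 n = prod_encode (str_code \<sigma>, prod_encode (str_code \<tau>, k)))
                 \<and> A \<in> cyl \<sigma> \<and> B \<in> cyl \<tau>}" using p join_in_cyl by blast
        then show "\<exists>q\<in>{(\<sigma>, \<tau>, k). (\<exists>n. g2 n = prod_encode (str_code \<sigma>, prod_encode (str_code \<tau>, k)))
                 \<and> A \<in> cyl \<sigma> \<and> B \<in> cyl \<tau>}. ennreal (real_of_rat (rat_dec (snd p))) \<le> ennreal (real_of_rat (rat_dec (snd (snd q))))"
          using p by force
      next
        fix q assume "q \<in> {(\<sigma>, \<tau>, k). (\<exists>n. g2 n = prod_encode (str_code \<sigma>, prod_encode (str_code \<tau>, k)))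
                 \<and> A \<in> cyl \<sigma> \<and> B \<in> cyl \<tau>}"
        then obtain \<sigma> \<tau> k n where q: "q = (\<sigma>, \<tau>, k)" "g2 n = prod_encode (str_code \<sigma>, prod_encode (str_code \<tau>, k))"
          "A \<in> cyl \<sigma>" "B \<in> cyl \<tau>" by blast
        obtain c k' where ck: "prod_decode (g n) = (c, k')" by fastforce
        have "levens c = str_code \<sigma>" "lodds c = str_code \<tau>" "k' = k" using q(2) ck by (simp_all add: g2_def)
        then have "evl (list_decode c) = map of_bool \<sigma>" "odl (list_decode c) = map of_bool \<tau>"
          by (simp_all add: levens_def lodds_def str_code_def list_encode_eq)
        then obtain \<rho> where r: "list_decode c = map of_bool \<rho>" "evl \<rho> = \<sigma>" "odl \<rho> = \<tau>"
          using evl_odl_bool by blast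
        have "c = str_code \<rho>" using r(1) by (metis list_decode_inverse str_code_def)
        then have "g n = prod_encode (str_code \<rho>, k)" using ck \<open>k' = k\<close> by (metis prod_decode_inverse)
        moreover have "join A B \<in> cyl \<rho>" using join_in_cyl q r by blast
        ultimately have "(\<rho>, k) \<in> {(\<rho>, k). (\<exists>n. g n = prod_encode (str_code \<rho>, k)) \<and> join A B \<in> cyl \<rho>}" by blast
        then show "\<exists>p\<in>{(\<rho>, k). (\<exists>n. g n = prod_encode (str_code \<rho>, k)) \<and> join A B \<in> cyl \<rho>}.
           ennreal (real_of_rat (rat_dec (snd (snd q)))) \<le> ennreal (real_of_rat (rat_dec (snd p)))"
          using q by force
      qed
      finally show ?thesis .
    qed
    then show ?thesis unfolding lsc2_def using g2c by blast
  qed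
  moreover have "computable_measure2 \<nu>'"
  proof -
    have sets': "sets \<nu>' = sets (cantor_space \<Otimes>\<^sub>M cantor_space)" by (simp add: \<nu>'_def)
    have fin: "emeasure \<nu> (cyl \<rho>) \<noteq> \<infinity>" for \<rho> using cn by (simp add: computable_measure_def)
    have fin': "emeasure \<nu>' (cyl \<sigma> \<times> cyl \<tau>) \<noteq> \<infinity>" for \<sigma> \<tau>
      using fin by (simp add: em sum_Pinfty finite_RR)
    obtain f where fc: "computable f" and fa: "\<forall>\<sigma> k. \<bar>real_of_rat (rat_dec (f (prod_encode (str_code \<sigma>, k)))) - measure \<nu> (cyl \<sigma>)\<bar> \<le> 1 / 2 ^ k"
      using cn unfolding computable_measure_def by blast
    define F where "F n = (let c1 = fst (prod_decode n); c2 = fst (prod_decode (snd (prod_decode n)));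
       k = snd (prod_decode (snd (prod_decode n))); M = 2 * max (llen c1) (llen c2) in
       rsum (\<lambda>j. if lcond c1 c2 j then f (prod_encode (lbits M j, k + M)) else 0) (2 ^ M))" for n
    have "recfn 1 (\<lambda>xs. F (xs!0))"
    proof -
      define c1 where "c1 ys = fst (prod_decode (ys!1))" for ys :: "nat list"
      define c2 where "c2 ys = fst (prod_decode (snd (prod_decode (ys!1))))" for ys :: "nat list"
      define kk where "kk ys = snd (prod_decode (snd (prod_decode (ys!1))))" for ys :: "nat list"
      define MM where "MM ys = 2 * max (llen (c1 ys)) (llen (c2 ys))" for ys
      define H where "H ys = (if lcond (c1 ys) (c2 ys) (ys!0) then f (prod_encode (lbits (MM ys) (ys!0), kk ys + MM ys)) else 0)" for ys
      have m: "max a b = (if a \<le> b then b else a)" for a b :: nat by auto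
      have r1: "recfn (Suc 1) c1" "recfn (Suc 1) c2" "recfn (Suc 1) kk"
        unfolding c1_def c2_def kk_def by (intro recfn_pfst recfn_psnd recfn_proj; simp)+
      have rM: "recfn (Suc 1) MM" unfolding MM_def m
        by (intro recfn_mult recfn_const recfn_If recpred_le recfn_llen r1)
      have rH: "recfn (Suc 1) H" unfolding H_def
        by (intro recfn_If recpred_lcond r1 recfn_proj recfn_app[OF fc] recfn_pe recfn_lbits rM recfn_add recfn_const) simp_all
      have rB: "recfn 1 (\<lambda>xs. 2 ^ MM (0 # xs))"
        unfolding MM_def c1_def c2_def m
        by (intro recfn_pow2 recfn_mult recfn_const recfn_If recpred_le recfn_llen recfn_pfst recfn_psnd recfn_proj) (simp_all add: recfn_proj)
      have "recfn 1 (\<lambda>xs. rsum (\<lambda>i. H (i # xs)) (2 ^ MM (0 # xs)))"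
        by (rule recfn_rsum[OF rH rB])
      then show ?thesis
        by (rule recfn_cong) (simp add: F_def Let_def H_def MM_def c1_def c2_def kk_def cong: if_cong)
    qed
    then have Fc: "computable F" by (rule recfn_computable)
    have approx: "\<bar>real_of_rat (rat_dec (F (prod_encode (str_code \<sigma>, prod_encode (str_code \<tau>, k))))) - measure \<nu>' (cyl \<sigma> \<times> cyl \<tau>)\<bar>
        \<le> 1 / 2 ^ k" for \<sigma> \<tau> k
    proof -
      define M where "M = LL \<sigma> \<tau>"
      define q where "q = (\<lambda>j. if lcond (str_code \<sigma>) (str_code \<tau>) j then f (prod_encode (lbits M j, k + M)) else 0)"
      have FF: "F (prod_encode (str_code \<sigma>, prod_encode (str_code \<tau>, k))) = rsum q (2 ^ M)"
        by (simp add: F_def q_def M_def LL_def llen_str Let_def cong: if_cong)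
      have "real_of_rat (rat_dec (rsum q (2 ^ M))) = (\<Sum>j<2^M. max 0 (real_of_rat (rat_dec (q j))))"
        by (simp add: rat_dec_rsum of_rat_sum real_of_rat_max0)
      moreover have "measure \<nu>' (cyl \<sigma> \<times> cyl \<tau>) = (\<Sum>j<2^M. if cnd \<sigma> \<tau> (bitsl M j) then measure \<nu> (cyl (bitsl M j)) else 0)"
      proof -
        have "measure \<nu>' (cyl \<sigma> \<times> cyl \<tau>) = enn2real (\<Sum>\<rho>\<in>RR \<sigma> \<tau>. emeasure \<nu> (cyl \<rho>))"
          by (simp add: measure_def em)
        also have "\<dots> = (\<Sum>\<rho>\<in>RR \<sigma> \<tau>. measure \<nu> (cyl \<rho>))"
          using fin by (subst enn2real_sum) (auto simp: measure_def top.not_eq_extremum)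
        also have "\<dots> = (\<Sum>j<2^M. if cnd \<sigma> \<tau> (bitsl M j) then measure \<nu> (cyl (bitsl M j)) else 0)"
          unfolding M_def by (rule sum_RR)
        finally show ?thesis .
      qed
      ultimately have "\<bar>real_of_rat (rat_dec (F (prod_encode (str_code \<sigma>, prod_encode (str_code \<tau>, k))))) - measure \<nu>' (cyl \<sigma> \<times> cyl \<tau>)\<bar>
         = \<bar>\<Sum>j<2^M. max 0 (real_of_rat (rat_dec (q j))) - (if cnd \<sigma> \<tau> (bitsl M j) then measure \<nu> (cyl (bitsl M j)) else 0)\<bar>"
        by (simp add: FF sum_subtractf)
      also have "\<dots> \<le> (\<Sum>j<2^M. \<bar>max 0 (real_of_rat (rat_dec (q j))) - (if cnd \<sigma> \<tau> (bitsl M j) then measure \<nu> (cyl (bitsl M j)) else 0)\<bar>)"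
        by (rule sum_abs)
      also have "\<dots> \<le> (\<Sum>j<(2::nat)^M. 1 / 2 ^ (k + M))"
      proof (rule sum_mono)
        fix j
        show "\<bar>max 0 (real_of_rat (rat_dec (q j))) - (if cnd \<sigma> \<tau> (bitsl M j) then measure \<nu> (cyl (bitsl M j)) else 0)\<bar> \<le> 1 / 2 ^ (k + M)"
        proof (cases "cnd \<sigma> \<tau> (bitsl M j)")
          case True
          then have "q j = f (prod_encode (str_code (bitsl M j), k + M))"
            by (simp add: q_def lcond_str M_def lbits_str)
          then have a: "\<bar>real_of_rat (rat_dec (q j)) - measure \<nu> (cyl (bitsl M j))\<bar> \<le> 1 / 2 ^ (k + M)"
            using fa by simp
          have "measure \<nu> (cyl (bitsl M j)) \<ge> 0" by simp
          then have "\<bar>max 0 (real_of_rat (rat_dec (q j))) - measure \<nu> (cyl (bitsl M j))\<bar> \<le> \<bar>real_of_rat (rat_dec (q j)) - measure \<nu> (cyl (bitsl M j))\<bar>"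
            by (rule abs_max0)
          then show ?thesis using a True by simp
        next
          case False
          then have "q j = 0" by (simp add: q_def lcond_str M_def)
          then show ?thesis using False by (simp add: rat_dec_0)
        qed
      qed
      also have "\<dots> = 1 / 2 ^ k" by (simp add: power_add)
      finally show ?thesis .
    qed
    show ?thesis unfolding computable_measure2_def using sets' fin' Fc approx by blast
  qed
  moreover have "(\<integral>\<^sup>+ z \<in> cyl \<sigma> \<times> cyl \<tau>. t' z \<partial>\<mu>) \<le> emeasure \<nu>' (cyl \<sigma> \<times> cyl \<tau>)" for \<sigma> \<tau>
  proof -
    have "(\<integral>\<^sup>+ z \<in> cyl \<sigma> \<times> cyl \<tau>. t' z \<partial>\<mu>) = (\<Sum>\<rho>\<in>RR \<sigma> \<tau>. \<integral>\<^sup>+ Z \<in> cyl \<rho>. t Z \<partial>distr \<mu> cantor_space joinp)"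
      unfolding t'_def by (rule nn_integral_unjoin_cyl[OF smu tm])
    also have "\<dots> \<le> (\<Sum>\<rho>\<in>RR \<sigma> \<tau>. emeasure \<nu> (cyl \<rho>))" using H by (intro sum_mono) auto
    finally show ?thesis by (simp add: em)
  qed
  ultimately have "t' (X, Y) < \<infinity>" using R unfolding comp_random2_def by blast
  then show "t (join X Y) < \<infinity>" by (simp add: t'_def joinp_def)
qed




lemma pil_bool:
  fixes l1 l2 :: "nat list"
  assumes p: "pil l1 l2 j = map of_bool \<rho>"
  shows "\<exists>\<sigma> \<tau>. l1 = map of_bool \<sigma> \<and> l2 = map of_bool \<tau> \<and> (\<forall>Z. Z \<in> cyl \<rho> \<longrightarrow> unjoin Z \<in> cyl \<sigma> \<times> cyl \<tau>)"
proof -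
  have len: "length \<rho> = 2 * max (length l1) (length l2)"
    using arg_cong[OF p, of length] by (simp add: pil_def)
  have e: "l1 ! i = of_bool (\<rho> ! (2*i))" if i: "i < length l1" for i
  proof -
    have lt: "2*i < 2 * max (length l1) (length l2)" using i by auto
    have "pil l1 l2 j ! (2*i) = padv l1 j i (2*i)" using lt by (simp add: pil_def)
    then show ?thesis using p i lt len by (simp add: padv_def)
  qed
  have o: "l2 ! i = of_bool (\<rho> ! (2*i+1))" if i: "i < length l2" for i
  proof -
    have lt: "2*i+1 < 2 * max (length l1) (length l2)" using i by auto
    have "pil l1 l2 j ! (2*i+1) = padv l2 j i (2*i+1)" using lt by (simp add: pil_def)
    then show ?thesis using p i lt len by (simp add: padv_def)
  qed
  define \<sigma> where "\<sigma> = map (\<lambda>i. \<rho> ! (2*i)) [0..<length l1]"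
  define \<tau> where "\<tau> = map (\<lambda>i. \<rho> ! (2*i+1)) [0..<length l2]"
  have "l1 = map of_bool \<sigma>" unfolding \<sigma>_def by (rule nth_equalityI) (simp_all add: e)
  moreover have "l2 = map of_bool \<tau>" unfolding \<tau>_def by (rule nth_equalityI) (simp_all add: o)
  moreover have "unjoin Z \<in> cyl \<sigma> \<times> cyl \<tau>" if Z: "Z \<in> cyl \<rho>" for Z
  proof -
    have "Z (2*i) = \<rho> ! (2*i)" if "i < length l1" for i using Z that len by (auto simp: cyl_def)
    moreover have "Z (2*i+1) = \<rho> ! (2*i+1)" if "i < length l2" for i using Z that len by (auto simp: cyl_def)
    ultimately show ?thesis by (auto simp: unjoin_def cyl_def \<sigma>_def \<tau>_def)
  qed
  ultimately show ?thesis by blast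
qed

lemma pil_fill:
  assumes Z: "unjoin Z \<in> cyl \<sigma> \<times> cyl \<tau>"
  defines "\<rho> \<equiv> map Z [0..<2 * max (length \<sigma>) (length \<tau>)]"
  defines "j \<equiv> horner_sum of_bool 2 \<rho> :: nat"
  shows "pil (map of_bool \<sigma>) (map of_bool \<tau>) j = map of_bool \<rho>" "Z \<in> cyl \<rho>"
proof -
  have zs: "Z (2*i) = \<sigma> ! i" if "i < length \<sigma>" for i using Z that by (auto simp: unjoin_def cyl_def)
  have zt: "Z (2*i+1) = \<tau> ! i" if "i < length \<tau>" for i using Z that by (auto simp: unjoin_def cyl_def)
  have bj: "(j div 2 ^ i) mod 2 = of_bool (Z i)" if "i < 2 * max (length \<sigma>) (length \<tau>)" for i
    using that by (simp add: bit_mod j_def bit_horner_sum_bit_iff \<rho>_def)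
  show "pil (map of_bool \<sigma>) (map of_bool \<tau>) j = map of_bool \<rho>"
  proof (rule nth_equalityI)
    show "length (pil (map of_bool \<sigma>) (map of_bool \<tau>) j) = length (map of_bool \<rho>)"
      by (simp add: pil_def \<rho>_def)
  next
    fix i assume "i < length (pil (map of_bool \<sigma>) (map of_bool \<tau>) j)"
    then have i: "i < 2 * max (length \<sigma>) (length \<tau>)" by (simp add: pil_def)
    have "pil (map of_bool \<sigma>) (map of_bool \<tau>) j ! i = of_bool (Z i)"
    proof (cases "even i")
      case True
      then obtain k where k: "i = 2*k" by blast
      have "pil (map of_bool \<sigma>) (map of_bool \<tau>) j ! i = padv (map of_bool \<sigma>) j k i"
        using i k by (simp add: pil_def)
      then show ?thesis
        using bj[OF i] zs[of k] k by (cases "k < length \<sigma>") (simp_all add: padv_def)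
    next
      case False
      then obtain k where k: "i = 2*k+1" using oddE by blast
      have "pil (map of_bool \<sigma>) (map of_bool \<tau>) j ! i = padv (map of_bool \<tau>) j k i"
        using i k by (simp add: pil_def)
      then show ?thesis
        using bj[OF i] zt[of k] k by (cases "k < length \<tau>") (simp_all add: padv_def)
    qed
    then show "pil (map of_bool \<sigma>) (map of_bool \<tau>) j ! i = map of_bool \<rho> ! i"
      using i by (simp add: \<rho>_def)
  qed
  show "Z \<in> cyl \<rho>" by (simp add: cyl_def \<rho>_def)
qed


lemma dirB:
  assumes mu: "computable_measure2 \<mu>" and R: "comp_random (distr \<mu> cantor_space joinp) (join X Y)"
  shows "comp_random2 \<mu> (X, Y)"
  unfolding comp_random2_def
proof (intro allI impI, elim conjE)
  fix t \<nu> assume lt: "lsc2 t" and cn: "computable_measure2 \<nu>"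
    and H: "\<forall>\<sigma> \<tau>. (\<integral>\<^sup>+ z \<in> cyl \<sigma> \<times> cyl \<tau>. t z \<partial>\<mu>) \<le> emeasure \<nu> (cyl \<sigma> \<times> cyl \<tau>)"
  have smu: "sets \<mu> = sets (cantor_space \<Otimes>\<^sub>M cantor_space)" using mu by (simp add: computable_measure2_def)
  have snu: "sets \<nu> = sets (cantor_space \<Otimes>\<^sub>M cantor_space)" using cn by (simp add: computable_measure2_def)
  have tm: "t \<in> borel_measurable (cantor_space \<Otimes>\<^sub>M cantor_space)" by (rule lsc2_measurable[OF lt])
  define T where "T = (\<lambda>Z. t (unjoin Z))"
  define N where "N = distr \<nu> cantor_space joinp"
  have Tm: "T \<in> borel_measurable cantor_space" unfolding T_def using tm by simp
  have "lsc T"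
  proof -
    obtain g where gc: "computable g" and g': "\<forall>X Y. t (X, Y) = (SUP p \<in> {(\<sigma>, \<tau>, k). (\<exists>n. g n = prod_encode (str_code \<sigma>, prod_encode (str_code \<tau>, k)))
                 \<and> X \<in> cyl \<sigma> \<and> Y \<in> cyl \<tau>}. ennreal (real_of_rat (rat_dec (snd (snd p)))))"
      using lt unfolding lsc2_def by blast
    define g3 where "g3 n = prod_encode (lpil (fst (prod_decode (g (fst (prod_decode n)))))
        (fst (prod_decode (snd (prod_decode (g (fst (prod_decode n))))))) (snd (prod_decode n)),
        snd (prod_decode (snd (prod_decode (g (fst (prod_decode n)))))))" for n
    have "recfn 1 (\<lambda>xs. g3 (xs!0))" unfolding g3_def
      by (intro recfn_pe recfn_lpil recfn_pfst recfn_psnd recfn_app[OF gc] recfn_proj) simp_all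
    then have g3c: "computable g3" by (rule recfn_computable)
    have "T Z = (SUP p \<in> {(\<rho>, k). (\<exists>n. g3 n = prod_encode (str_code \<rho>, k)) \<and> Z \<in> cyl \<rho>}.
        ennreal (real_of_rat (rat_dec (snd p))))" for Z
    proof -
      have "T Z = (SUP p \<in> {(\<sigma>, \<tau>, k). (\<exists>n. g n = prod_encode (str_code \<sigma>, prod_encode (str_code \<tau>, k)))
                 \<and> unjoin Z \<in> cyl \<sigma> \<times> cyl \<tau>}. ennreal (real_of_rat (rat_dec (snd (snd p)))))"
        using g'[rule_format, of "fst (unjoin Z)" "snd (unjoin Z)"] by (simp add: T_def mem_Times_iff)
      also have "\<dots> = (SUP p \<in> {(\<rho>, k). (\<exists>n. g3 n = prod_encode (str_code \<rho>, k)) \<and> Z \<in> cyl \<rho>}.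
        ennreal (real_of_rat (rat_dec (snd p))))"
      proof (rule SUP_eq)
        fix q assume "q \<in> {(\<sigma>, \<tau>, k). (\<exists>n. g n = prod_encode (str_code \<sigma>, prod_encode (str_code \<tau>, k)))
                 \<and> unjoin Z \<in> cyl \<sigma> \<times> cyl \<tau>}"
        moreover obtain \<sigma> \<tau> k where q1: "q = (\<sigma>, \<tau>, k)" by (cases q) auto
        ultimately have "\<exists>m. g m = prod_encode (str_code \<sigma>, prod_encode (str_code \<tau>, k))"
          and q3: "unjoin Z \<in> cyl \<sigma> \<times> cyl \<tau>" by auto
        then obtain m where q2: "g m = prod_encode (str_code \<sigma>, prod_encode (str_code \<tau>, k))" by blast
        note q = q1 q2 q3
        define \<rho> where "\<rho> = map Z [0..<2 * max (length \<sigma>) (length \<tau>)]"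
        define j where "j = (horner_sum of_bool 2 \<rho> :: nat)"
        have pf: "pil (map of_bool \<sigma>) (map of_bool \<tau>) j = map of_bool \<rho>" "Z \<in> cyl \<rho>"
          using pil_fill[OF q(3)] unfolding \<rho>_def j_def by simp_all
        have "g3 (prod_encode (m, j)) = prod_encode (str_code \<rho>, k)"
        proof -
          have "lpil (str_code \<sigma>) (str_code \<tau>) j = str_code \<rho>"
            using pf(1) by (simp add: lpil_def list_decode_str str_code_def)
          then show ?thesis using q(2) by (simp add: g3_def)
        qed
        then have "(\<rho>, k) \<in> {(\<rho>, k). (\<exists>n. g3 n = prod_encode (str_code \<rho>, k)) \<and> Z \<in> cyl \<rho>}"
          using pf by blast
        then show "\<exists>p\<in>{(\<rho>, k). (\<exists>n. g3 n = prod_encode (str_code \<rho>, k)) \<and> Z \<in> cyl \<rho>}.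
           ennreal (real_of_rat (rat_dec (snd (snd q)))) \<le> ennreal (real_of_rat (rat_dec (snd p)))"
          by (rule bexI[of _ "(\<rho>, k)", rotated]) (simp add: q)
      next
        fix p assume "p \<in> {(\<rho>, k). (\<exists>n. g3 n = prod_encode (str_code \<rho>, k)) \<and> Z \<in> cyl \<rho>}"
        moreover obtain \<rho> k where p1: "p = (\<rho>, k)" by (cases p) auto
        ultimately have "\<exists>n. g3 n = prod_encode (str_code \<rho>, k)" and p3: "Z \<in> cyl \<rho>" by auto
        then obtain n where p2: "g3 n = prod_encode (str_code \<rho>, k)" by blast
        note p = p1 p2 p3
        obtain m j where mj: "prod_decode n = (m, j)" by fastforce
        obtain c1 w where cw: "prod_decode (g m) = (c1, w)" by fastforce
        obtain c2 k' where ck: "prod_decode w = (c2, k')" by fastforce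
        have "lpil c1 c2 j = str_code \<rho>" "k' = k" using p(2) by (simp_all add: g3_def mj cw ck)
        then have "pil (list_decode c1) (list_decode c2) j = map of_bool \<rho>"
          by (simp add: lpil_def str_code_def list_encode_eq)
        then obtain \<sigma> \<tau> where st: "list_decode c1 = map of_bool \<sigma>" "list_decode c2 = map of_bool \<tau>"
          "\<forall>Z. Z \<in> cyl \<rho> \<longrightarrow> unjoin Z \<in> cyl \<sigma> \<times> cyl \<tau>" using pil_bool by blast
        have "c1 = str_code \<sigma>" using st(1) list_decode_inverse[of c1] by (simp add: str_code_def)
        moreover have "c2 = str_code \<tau>" using st(2) list_decode_inverse[of c2] by (simp add: str_code_def)
        ultimately have "g m = prod_encode (str_code \<sigma>, prod_encode (str_code \<tau>, k))"
          using cw ck \<open>k' = k\<close> prod_decode_inverse[of "g m"] prod_decode_inverse[of w] by simp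
        then have "(\<sigma>, \<tau>, k) \<in> {(\<sigma>, \<tau>, k). (\<exists>n. g n = prod_encode (str_code \<sigma>, prod_encode (str_code \<tau>, k)))
                 \<and> unjoin Z \<in> cyl \<sigma> \<times> cyl \<tau>}" using st p by blast
        then show "\<exists>q\<in>{(\<sigma>, \<tau>, k). (\<exists>n. g n = prod_encode (str_code \<sigma>, prod_encode (str_code \<tau>, k)))
                 \<and> unjoin Z \<in> cyl \<sigma> \<times> cyl \<tau>}.
           ennreal (real_of_rat (rat_dec (snd p))) \<le> ennreal (real_of_rat (rat_dec (snd (snd q))))"
          by (rule bexI[of _ "(\<sigma>, \<tau>, k)", rotated]) (simp add: p)
      qed
      finally show ?thesis .
    qed
    then show ?thesis unfolding lsc_def using g3c by blast
  qed
  moreover have "computable_measure N"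
  proof -
    have em: "emeasure N (cyl \<rho>) = emeasure \<nu> (cyl (evl \<rho>) \<times> cyl (odl \<rho>))" for \<rho>
      unfolding N_def by (rule emeasure_distr_joinp[OF snu])
    have sets': "sets N = sets cantor_space" by (simp add: N_def)
    have fin: "emeasure N (cyl \<rho>) \<noteq> \<infinity>" for \<rho> using cn em by (simp add: computable_measure2_def)
    obtain f where fc: "computable f" and fa: "\<forall>\<sigma> \<tau> k. \<bar>real_of_rat (rat_dec (f (prod_encode (str_code \<sigma>, prod_encode (str_code \<tau>, k)))))
             - measure \<nu> (cyl \<sigma> \<times> cyl \<tau>)\<bar> \<le> 1 / 2 ^ k"
      using cn unfolding computable_measure2_def by blast
    define F where "F n = f (prod_encode (levens (fst (prod_decode n)), prod_encode (lodds (fst (prod_decode n)), snd (prod_decode n))))" for n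
    have "recfn 1 (\<lambda>xs. F (xs!0))" unfolding F_def
      by (intro recfn_app[OF fc] recfn_pe recfn_levens recfn_lodds recfn_pfst recfn_psnd recfn_proj) simp_all
    then have Fc: "computable F" by (rule recfn_computable)
    have "\<bar>real_of_rat (rat_dec (F (prod_encode (str_code \<rho>, k)))) - measure N (cyl \<rho>)\<bar> \<le> 1 / 2 ^ k" for \<rho> k
      using fa by (simp add: F_def levens_str lodds_str measure_def em)
    then show ?thesis unfolding computable_measure_def using sets' fin Fc by blast
  qed
  moreover have "(\<integral>\<^sup>+ Z \<in> cyl \<rho>. T Z \<partial>distr \<mu> cantor_space joinp) \<le> emeasure N (cyl \<rho>)" for \<rho>
  proof -
    have "(\<integral>\<^sup>+ Z \<in> cyl \<rho>. T Z \<partial>distr \<mu> cantor_space joinp) = (\<integral>\<^sup>+ z \<in> cyl (evl \<rho>) \<times> cyl (odl \<rho>). T (joinp z) \<partial>\<mu>)"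
      by (rule nn_integral_joinp_cyl[OF smu Tm])
    also have "\<dots> = (\<integral>\<^sup>+ z \<in> cyl (evl \<rho>) \<times> cyl (odl \<rho>). t z \<partial>\<mu>)" by (simp add: T_def)
    also have "\<dots> \<le> emeasure \<nu> (cyl (evl \<rho>) \<times> cyl (odl \<rho>))" using H by blast
    also have "\<dots> = emeasure N (cyl \<rho>)" unfolding N_def by (rule emeasure_distr_joinp[OF snu, symmetric])
    finally show ?thesis .
  qed
  ultimately have "T (join X Y) < \<infinity>" using R unfolding comp_random_def by blast
  moreover have "unjoin (join X Y) = (X, Y)" using unjoin_joinp[of "(X, Y)"] by (simp add: joinp_def)
  ultimately show "t (X, Y) < \<infinity>" by (simp add: T_def)
qed

theorem mainTheorem7:
  fixes \<mu> :: "(cantor \<times> cantor) measure" and X Y :: cantor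
  assumes "computable_measure2 \<mu>"
  shows "comp_random2 \<mu> (X, Y) \<longleftrightarrow>
         comp_random (distr \<mu> cantor_space (\<lambda>(A, B). join A B)) (join X Y)"
  using dirA[OF assms] dirB[OF assms] unfolding joinp_def[symmetric] by blast


end
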